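(* There is no $\kappa>0$ such that $\frac{dM_\kappa}{d\kappa}=0$ and $\frac{d}{d\kappa}\Big(\frac{M_\kappa}{R_\kappa}\Big)=0$ simultaneously.
   Context: Equation of state. $P:[0,\infty)\to[0,\infty)$ satisfies: (P1) $P\in C^1([0,\infty))$, $P(0)=0$, $P'(\rho)>0$ for $\rho>0$; (P2) there are $\zeta>0$, $k>0$, $\gamma\in(4/3,2)$ and $f\in C^1([0,\zeta])$ with $f(0)=0$ such that $P(\rho)=k\rho^\gamma(1+f(\rho))$ on $[0,\zeta]$; (P3) $P$ is invertible on $[0,\infty)$ and there are constants $c_s\in(0,1]$, $c_2>0$ with $|p-c_s^2P^{-1}(p)|\le c_2p^{1/2}$ for all $p>0$; (P4) $0<P'(\rho)\le 1$ for all $\rho>0$. Set $Q(\rho)=\int_0^\rho\frac{P'(s)}{s+P(s)}ds$ and $g(y)=Q^{-1}(y)$ for $y>0$, $g(y)=0$ for $y\le0$. Steady states. For each $\kappa>0$ let $y_\kappa$ be the unique solution on $[0,\infty)$ of $y'(r)=-\big(1-\frac{2m(r)}{r}\big)^{-1}\big(\frac{m(r)}{r^2}+4\pi rP(g(y(r)))\big)$, $y(0)=\kappa$, where $m(r)=4\pi\int_0^rs^2g(y(s))\,ds$; it is known that $y_\kappa$ exists globally, is strictly decreasing and has a unique zero $R_\kappa>0$ (the star radius). Put $\rho_\kappa=g(y_\kappa)$ (supported in $[0,R_\kappa]$), $m_\kappa(r)=4\pi\int_0^rs^2\rho_\kappa(s)ds$, $M_\kappa=m_\kappa(R_\kappa)$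 (ADM mass). The maps $\kappa\mapsto y_\kappa, M_\kappa,R_\kappa$ are $C^1$. *)

theory Defs
  imports "HOL-Analysis.Analysis"
begin

definition eos :: "(real \<Rightarrow> real) \<Rightarrow> (real \<Rightarrow> real) \<Rightarrow> bool" where
  "eos P P' \<longleftrightarrow>
     \<comment> \<open>(P1)\<close>
     (\<forall>\<rho>\<ge>0. (P has_real_derivative P' \<rho>) (at \<rho> within {0..})) \<and>
     continuous_on {0..} P' \<and> P 0 = 0 \<and> (\<forall>\<rho>>0. P' \<rho> > 0) \<and>
     \<comment> \<open>(P2)\<close>
     (\<exists>\<zeta> k \<gamma> f f'. \<zeta> > 0 \<and> k > 0 \<and> 4/3 < \<gamma> \<and> \<gamma> < 2 \<and>
        (\<forall>\<rho>\<in>{0..\<zeta>}. (f has_real_derivative f' \<rho>) (at \<rho> within {0..\<zeta>})) \<and>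
        continuous_on {0..\<zeta>} f' \<and> f 0 = 0 \<and>
        (\<forall>\<rho>\<in>{0..\<zeta>}. P \<rho> = k * \<rho> powr \<gamma> * (1 + f \<rho>))) \<and>
     \<comment> \<open>(P3)\<close>
     bij_betw P {0..} {0..} \<and>
     (\<exists>cs c2. 0 < cs \<and> cs \<le> 1 \<and> c2 > 0 \<and>
        (\<forall>p>0. \<bar>p - cs\<^sup>2 * the_inv_into {0..} P p\<bar> \<le> c2 * sqrt p)) \<and>
     \<comment> \<open>(P4)\<close>
     (\<forall>\<rho>>0. 0 < P' \<rho> \<and> P' \<rho> \<le> 1)"

definition Qf :: "(real \<Rightarrow> real) \<Rightarrow> (real \<Rightarrow> real) \<Rightarrow> real \<Rightarrow> real" where
  "Qf P P' \<rho> = integral {0..\<rho>} (\<lambda>s. P' s / (s + P s))"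

definition gf :: "(real \<Rightarrow> real) \<Rightarrow> (real \<Rightarrow> real) \<Rightarrow> real \<Rightarrow> real" where
  "gf P P' y = (if y > 0 then the_inv_into {0<..} (Qf P P') y else 0)"

definition massf :: "(real \<Rightarrow> real) \<Rightarrow> (real \<Rightarrow> real) \<Rightarrow> (real \<Rightarrow> real) \<Rightarrow> real \<Rightarrow> real" where
  "massf P P' y r = 4 * pi * integral {0..r} (\<lambda>s. s\<^sup>2 * gf P P' (y s))"

text \<open>y solves the TOV equation on [0,oo) with y(0) = kappa (at r = 0 the right-hand
  side evaluates to 0, its limiting value, since m(0) = 0).\<close>
definition tov_sol :: "(real \<Rightarrow> real) \<Rightarrow> (real \<Rightarrow> real) \<Rightarrow> real \<Rightarrow> (real \<Rightarrow> real) \<Rightarrow> bool" where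
  "tov_sol P P' \<kappa> y \<longleftrightarrow> y 0 = \<kappa> \<and>
     (\<forall>r>0. 2 * massf P P' y r < r) \<and>
     (\<forall>r\<ge>0. (y has_real_derivative
         (- (1 / (1 - 2 * massf P P' y r / r)) *
            (massf P P' y r / r\<^sup>2 + 4 * pi * r * P (gf P P' (y r)))))
       (at r within {0..}))"

end

theory Submission
  imports Defs
begin

lemma deriv_bound_real:
  fixes f f' :: "real \<Rightarrow> real"
  assumes "a \<le> b" "\<And>x. x \<in> {a..b} \<Longrightarrow> (f has_real_derivative f' x) (at x within {a..b})"
    "\<And>x. x \<in> {a..b} \<Longrightarrow> \<bar>f' x\<bar> \<le> B" "x \<in> {a..b}" "y \<in> {a..b}"
  shows "\<bar>f x - f y\<bar> \<le> B * \<bar>x - y\<bar>"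
proof -
  have "norm (f x - f y) \<le> B * norm (x - y)"
  proof (rule differentiable_bound[where f'="\<lambda>x. (*) (f' x)" and S="{a..b}"])
    fix z assume z: "z \<in> {a..b}"
    show "(f has_derivative (*) (f' z)) (at z within {a..b})"
      using assms(2)[OF z] by (simp add: has_field_derivative_def)
    show "onorm ((*) (f' z)) \<le> B"
      apply (rule onorm_bound)
      using assms(3)[OF z] by (auto simp: abs_mult mult_right_mono)
  qed (use assms in auto)
  then show ?thesis by simp
qed

locale eosl =
  fixes P P' :: "real \<Rightarrow> real"
  assumes eos: "eos P P'"
begin

lemmas E = eos[unfolded eos_def]
lemma dP: "\<rho> \<ge> 0 \<Longrightarrow> (P has_real_derivative P' \<rho>) (at \<rho> within {0..})"
  using E[THEN conjunct1] by simp
lemma P'c: "continuous_on {0..} P'" using E[THEN conjunct2, THEN conjunct1] .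
lemma P0: "P 0 = 0" using E[THEN conjunct2, THEN conjunct2, THEN conjunct1] .
lemma P'pos: "\<rho> > 0 \<Longrightarrow> 0 < P' \<rho>" using E[THEN conjunct2, THEN conjunct2, THEN conjunct2, THEN conjunct1] by simp
lemma P2: "\<exists>\<zeta> k \<gamma> f f'. \<zeta> > 0 \<and> k > 0 \<and> 4/3 < \<gamma> \<and> \<gamma> < 2 \<and>
        (\<forall>\<rho>\<in>{0..\<zeta>}. (f has_real_derivative f' \<rho>) (at \<rho> within {0..\<zeta>})) \<and>
        continuous_on {0..\<zeta>} f' \<and> f 0 = 0 \<and>
        (\<forall>\<rho>\<in>{0..\<zeta>}. P \<rho> = k * \<rho> powr \<gamma> * (1 + f \<rho>))"
  using E[THEN conjunct2, THEN conjunct2, THEN conjunct2, THEN conjunct2, THEN conjunct1] .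
lemma Pbij: "bij_betw P {0..} {0..}" using E[THEN conjunct2, THEN conjunct2, THEN conjunct2, THEN conjunct2, THEN conjunct2, THEN conjunct1] .
lemma P3: "\<exists>cs c2. 0 < cs \<and> cs \<le> 1 \<and> c2 > 0 \<and>
        (\<forall>p>0. \<bar>p - cs\<^sup>2 * the_inv_into {0..} P p\<bar> \<le> c2 * sqrt p)"
  using E[THEN conjunct2, THEN conjunct2, THEN conjunct2, THEN conjunct2, THEN conjunct2, THEN conjunct2, THEN conjunct1] .
lemma P'le1: "\<rho> > 0 \<Longrightarrow> P' \<rho> \<le> 1" using E[THEN conjunct2, THEN conjunct2, THEN conjunct2, THEN conjunct2, THEN conjunct2, THEN conjunct2, THEN conjunct2] by simp

lemma dP_at: "\<rho> > 0 \<Longrightarrow> (P has_real_derivative P' \<rho>) (at \<rho>)"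
proof -
  assume r: "\<rho> > 0"
  have "(P has_real_derivative P' \<rho>) (at \<rho> within {0<..})"
    using has_field_derivative_subset[OF dP[of \<rho>], of "{0<..}"] r by fastforce
  moreover have "at \<rho> within {0<..} = at \<rho>" by (rule at_within_open) (use r in simp_all)
  ultimately show ?thesis by simp
qed

lemma P_nonneg: "\<rho> \<ge> 0 \<Longrightarrow> P \<rho> \<ge> 0"
proof -
  assume "\<rho> \<ge> 0"
  then have "P \<rho> \<in> P ` {0..}" by simp
  moreover have s: "P ` {0..} = {0..}" by (rule bij_betw_imp_surj_on[OF Pbij])
  ultimately have "P \<rho> \<in> {0..}" by (simp only: s)
  then show ?thesis by simp
qed

lemma P_pos: "\<rho> > 0 \<Longrightarrow> P \<rho> > 0"
proof -
  assume r: "\<rho> > 0"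
  have "P \<rho> \<noteq> P 0" using bij_betw_imp_inj_on[OF Pbij] r unfolding inj_on_def by force
  then show ?thesis using P_nonneg[of \<rho>] r P0 by auto
qed

lemma P_cont: "continuous_on {0..} P"
  unfolding continuous_on_eq_continuous_within
  using DERIV_continuous[OF dP] by simp

lemma P'0: "0 \<le> P' 0 \<and> P' 0 \<le> 1"
proof -
  have "continuous (at 0 within {0..}) P'" using P'c by (simp add: continuous_on_eq_continuous_within)
  then have "(P' \<longlongrightarrow> P' 0) (at 0 within {0..})" by (simp add: continuous_within)
  then have t: "(P' \<longlongrightarrow> P' 0) (at_right 0)"
    by (rule tendsto_within_subset) auto
  have ev: "eventually (\<lambda>x. 0 < P' x \<and> P' x \<le> 1) (at_right (0::real))"
    unfolding eventually_at_right_field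
    by (rule exI[of _ 1]) (simp add: P'pos P'le1)
  have e1: "eventually (\<lambda>x. P' x \<le> 1) (at_right (0::real))" using ev by (rule eventually_mono) simp
  have e2: "eventually (\<lambda>x. 0 \<le> P' x) (at_right (0::real))" using ev by (rule eventually_mono) simp
  have "P' 0 \<le> 1" by (rule tendsto_upperbound[OF t e1]) simp
  moreover have "0 \<le> P' 0" by (rule tendsto_lowerbound[OF t e2]) simp
  ultimately show ?thesis by simp
qed

lemma P'_bounds: "\<rho> \<ge> 0 \<Longrightarrow> 0 \<le> P' \<rho> \<and> P' \<rho> \<le> 1"
  using P'0 P'pos[of \<rho>] P'le1[of \<rho>] by (cases "\<rho> = 0") simp_all

lemma P_lip: assumes "a \<ge> 0" "b \<ge> 0" shows "\<bar>P a - P b\<bar> \<le> \<bar>a - b\<bar>"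
proof -
  have "\<bar>P a - P b\<bar> \<le> 1 * \<bar>a - b\<bar>"
    apply (rule deriv_bound_real[where a="min a b" and b="max a b" and f'=P'])
    subgoal by simp
    subgoal for x using has_field_derivative_subset[OF dP[of x], of "{min a b..max a b}"] assms by fastforce
    subgoal for x using P'_bounds[of x] assms by auto
    by auto
  then show ?thesis by simp
qed

lemma P_le: "\<rho> \<ge> 0 \<Longrightarrow> P \<rho> \<le> \<rho>"
  using P_lip[of \<rho> 0] P0 by simp

end

context eosl begin

lemma P'_near0:
  "\<exists>s0 \<gamma> c C. s0 > 0 \<and> c > 0 \<and> C > 0 \<and> 1 < \<gamma> \<and> \<gamma> < 2 \<and>
     (\<forall>s. 0 < s \<and> s \<le> s0 \<longrightarrow> c * s powr (\<gamma>-2) \<le> P' s / s \<and> P' s / s \<le> C * s powr (\<gamma>-2))"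
proof -
  obtain \<zeta> k \<gamma> f f' where zk: "\<zeta> > 0" "k > 0" "4/3 < \<gamma>" "\<gamma> < 2"
    and df: "\<forall>\<rho>\<in>{0..\<zeta>}. (f has_real_derivative f' \<rho>) (at \<rho> within {0..\<zeta>})"
    and f'c: "continuous_on {0..\<zeta>} f'" and f0: "f 0 = 0"
    and Pf: "\<forall>\<rho>\<in>{0..\<zeta>}. P \<rho> = k * \<rho> powr \<gamma> * (1 + f \<rho>)"
    using P2 by blast
  have "bounded (f' ` {0..\<zeta>})"
    by (rule compact_imp_bounded[OF compact_continuous_image[OF f'c compact_Icc]])
  then obtain F1 where F1: "F1 > 0" "\<And>s. s \<in> {0..\<zeta>} \<Longrightarrow> \<bar>f' s\<bar> \<le> F1"
    unfolding bounded_pos by auto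
  have "continuous (at 0 within {0..\<zeta>}) f"
    using DERIV_continuous[of f "f' 0" 0 "{0..\<zeta>}"] df zk by simp
  then obtain d where d: "d > 0" "\<And>s. s \<in> {0..\<zeta>} \<Longrightarrow> dist s 0 < d \<Longrightarrow> dist (f s) (f 0) < 1/2"
    unfolding continuous_within_eps_delta by (meson divide_pos_pos zero_less_numeral zero_less_one)
  define s0 where "s0 = min (\<zeta>/2) (min (d/2) (\<gamma>/(4*F1)))"
  have s0: "s0 > 0" "s0 < \<zeta>" "s0 < d" "s0 * F1 \<le> \<gamma>/4"
  proof -
    have a: "s0 \<le> \<zeta>/2" "s0 \<le> d/2" "s0 \<le> \<gamma>/(4*F1)" unfolding s0_def by auto
    have "s0 > 0" using zk d F1 unfolding s0_def by auto
    moreover have "s0 * F1 \<le> \<gamma>/(4*F1) * F1" using a(3) F1 by (intro mult_right_mono) auto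
    ultimately show "s0 > 0" "s0 < \<zeta>" "s0 < d" "s0 * F1 \<le> \<gamma>/4" using a zk d F1 by auto
  qed
  have main: "\<gamma>*k/4 * s powr (\<gamma>-2) \<le> P' s / s \<and> P' s / s \<le> 2*\<gamma>*k * s powr (\<gamma>-2)"
    if s: "0 < s" "s \<le> s0" for s
  proof -
    have sz: "s \<in> {0<..<\<zeta>}" using s s0 by auto
    have dfs: "(f has_real_derivative f' s) (at s)"
    proof -
      have "(f has_real_derivative f' s) (at s within {0<..<\<zeta>})"
        using has_field_derivative_subset[of f "f' s" s "{0..\<zeta>}" "{0<..<\<zeta>}"] df sz by fastforce
      moreover have "at s within {0<..<\<zeta>} = at s" by (rule at_within_open) (use sz in simp_all)
      ultimately show ?thesis by simp
    qed
    have dH: "((\<lambda>\<rho>. k * \<rho> powr \<gamma> * (1 + f \<rho>)) has_real_derivative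
         k * (\<gamma> * s powr (\<gamma> - 1)) * (1 + f s) + k * s powr \<gamma> * f' s) (at s)"
      using s by (auto intro!: derivative_eq_intros dfs has_real_derivative_powr simp: algebra_simps)
    have "(P has_real_derivative k * (\<gamma> * s powr (\<gamma> - 1)) * (1 + f s) + k * s powr \<gamma> * f' s) (at s)"
      by (rule has_field_derivative_transform_within_open[OF dH, of "{0<..<\<zeta>}"]) (use sz Pf in auto)
    then have P's: "P' s = k * (\<gamma> * s powr (\<gamma> - 1)) * (1 + f s) + k * s powr \<gamma> * f' s"
      using DERIV_unique dP_at s by blast
    define A where "A = s powr (\<gamma>-2)"
    have A: "A > 0" using s unfolding A_def by simp
    have e1: "s powr (\<gamma>-1) = A * s" unfolding A_def using s powr_add[of s "\<gamma>-2" 1] by simp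
    have e2: "s powr \<gamma> = A * s * s" unfolding A_def using s powr_add[of s "\<gamma>-2" 2]
      by (simp add: power2_eq_square[symmetric] powr_realpow)
    have q: "P' s / s = A * (k*\<gamma>*(1 + f s) + k * s * f' s)"
      using s unfolding P's e1 e2 by (simp add: field_simps)
    have fs: "\<bar>f s\<bar> \<le> 1/2" using d(2)[of s] sz s s0 f0 by (auto simp: dist_real_def)
    have f's: "\<bar>s * f' s\<bar> \<le> \<gamma>/4"
    proof -
      have "\<bar>s * f' s\<bar> = s * \<bar>f' s\<bar>" using s by (simp add: abs_mult)
      also have "\<dots> \<le> s0 * F1" using F1(2)[of s] sz s by (intro mult_mono) auto
      finally show ?thesis using s0 by simp
    qed
    have kg: "k*\<gamma> > 0" using zk by simp
    have lo: "k*\<gamma>*(1 + f s) + k * s * f' s \<ge> \<gamma>*k/4"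
    proof -
      have "k*\<gamma>*(1 + f s) \<ge> k*\<gamma>*(1/2)" using fs kg by (intro mult_left_mono) auto
      moreover have "k * (s * f' s) \<ge> k * (-\<gamma>/4)" using f's zk by (intro mult_left_mono) auto
      moreover have "k * s * f' s = k * (s * f' s)" by simp
      moreover have "\<gamma>*k/4 = k*\<gamma>*(1/2) + k*(-\<gamma>/4)" by (simp add: field_simps)
      ultimately show ?thesis using kg by linarith
    qed
    have hi: "k*\<gamma>*(1 + f s) + k * s * f' s \<le> 2*\<gamma>*k"
    proof -
      have "k*\<gamma>*(1 + f s) \<le> k*\<gamma>*(3/2)" using fs kg by (intro mult_left_mono) auto
      moreover have "k * (s * f' s) \<le> k * (\<gamma>/4)" using f's zk by (intro mult_left_mono) auto
      moreover have "k * s * f' s = k * (s * f' s)" by simp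
      moreover have "k*\<gamma>*(3/2) + k*(\<gamma>/4) = 7/4*(k*\<gamma>)" "2*\<gamma>*k = 2*(k*\<gamma>)" by (simp_all add: field_simps)
      ultimately show ?thesis using kg by linarith
    qed
    have m1: "A * (\<gamma>*k/4) \<le> A * (k*\<gamma>*(1 + f s) + k * s * f' s)" by (rule mult_left_mono[OF lo]) (use A in simp)
    have m2: "A * (k*\<gamma>*(1 + f s) + k * s * f' s) \<le> A * (2*\<gamma>*k)" by (rule mult_left_mono[OF hi]) (use A in simp)
    show ?thesis unfolding q A_def[symmetric] using m1 m2 by (simp add: mult.commute)
  qed
  show ?thesis
    apply (rule exI[of _ s0], rule exI[of _ \<gamma>], rule exI[of _ "\<gamma>*k/4"], rule exI[of _ "2*\<gamma>*k"])
    using main s0 zk by auto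
qed

end

context eosl begin

definition I :: "real \<Rightarrow> real" where "I s = P' s / (s + P s)"

lemma Qf_I: "Qf P P' \<rho> = integral {0..\<rho>} I"
  unfolding Qf_def I_def ..

lemma I_nonneg: "s \<ge> 0 \<Longrightarrow> I s \<ge> 0"
  unfolding I_def using P'_bounds[of s] P_nonneg[of s] by simp

lemma I_pos: "s > 0 \<Longrightarrow> I s > 0"
  unfolding I_def using P'pos[of s] P_nonneg[of s] by simp

lemma I_0: "I 0 = 0" unfolding I_def P0 by simp

lemma I_cont: assumes "a > 0" shows "continuous_on {a..b} I"
proof -
  have "continuous_on {a..b} P'" by (rule continuous_on_subset[OF P'c]) (use assms in auto)
  moreover have "continuous_on {a..b} P" by (rule continuous_on_subset[OF P_cont]) (use assms in auto)
  moreover have "\<forall>x\<in>{a..b}. x + P x \<noteq> 0"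
  proof
    fix x assume "x \<in> {a..b}"
    then have "x > 0" using assms by simp
    then show "x + P x \<noteq> 0" using P_nonneg[of x] by simp
  qed
  ultimately show ?thesis unfolding I_def
    by (intro continuous_on_divide continuous_on_add continuous_on_id)
qed

lemma I_near0:
  "\<exists>s0 \<gamma> c C. s0 > 0 \<and> c > 0 \<and> C > 0 \<and> 1 < \<gamma> \<and> \<gamma> < 2 \<and>
     (\<forall>s. 0 < s \<and> s \<le> s0 \<longrightarrow> c * s powr (\<gamma>-2) \<le> I s \<and> I s \<le> C * s powr (\<gamma>-2))"
proof -
  obtain s0 \<gamma> c C where h: "s0 > 0" "c > 0" "C > 0" "1 < \<gamma>" "\<gamma> < 2"
    and b: "\<And>s. 0 < s \<Longrightarrow> s \<le> s0 \<Longrightarrow> c * s powr (\<gamma>-2) \<le> P' s / s \<and> P' s / s \<le> C * s powr (\<gamma>-2)"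
    using P'_near0 by blast
  have main: "c/2 * s powr (\<gamma>-2) \<le> I s \<and> I s \<le> C * s powr (\<gamma>-2)" if s: "0 < s" "s \<le> s0" for s
  proof -
    have Pp: "0 \<le> P s" "P s \<le> s" using P_nonneg[of s] P_le[of s] s by auto
    have P'n: "P' s \<ge> 0" using P'pos[of s] s by simp
    have d1: "P' s / (s*2) \<le> P' s / (s + P s)"
      by (rule divide_left_mono) (use Pp s P'n in auto)
    have d2: "P' s / (s + P s) \<le> P' s / s"
      by (rule divide_left_mono) (use Pp s P'n in auto)
    have "(P' s / s) * (1/2) = P' s / (s*2)" by simp
    then have "(P' s / s) * (1/2) \<le> I s" "I s \<le> P' s / s" using d1 d2 unfolding I_def by auto
    then show ?thesis using b[OF s] by auto
  qed
  show ?thesis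
    apply (rule exI[of _ s0], rule exI[of _ \<gamma>], rule exI[of _ "c/2"], rule exI[of _ C])
    using main h by auto
qed

lemma I_int0: "\<exists>s0>0. I integrable_on {0..s0}"
proof -
  obtain s0 \<gamma> c C where h: "s0 > 0" "c > 0" "C > 0" "1 < \<gamma>" "\<gamma> < 2"
    and b: "\<And>s. 0 < s \<Longrightarrow> s \<le> s0 \<Longrightarrow> c * s powr (\<gamma>-2) \<le> I s \<and> I s \<le> C * s powr (\<gamma>-2)"
    using I_near0 by blast
  define a :: "nat \<Rightarrow> real" where "a k = s0 / real (Suc k)" for k
  have a: "0 < a k" "a k \<le> s0" for k unfolding a_def using h by (auto simp: field_simps)
  define fk where "fk k s = (if s \<in> {a k..s0} then I s else 0)" for k s
  have "I integrable_on {0..s0}"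
  proof (rule dominated_convergence(1)[where f=fk and h="\<lambda>s. C * s powr (\<gamma>-2)"])
    fix k
    have "I integrable_on ({a k..s0} \<inter> {0..s0})"
      using integrable_continuous_interval[OF I_cont[OF a(1)[of k]], of s0] a[of k] by (simp add: Int_absorb2)
    then show "fk k integrable_on {0..s0}" unfolding fk_def by (subst integrable_restrict_Int)
  next
    show "(\<lambda>s. C * s powr (\<gamma>-2)) integrable_on {0..s0}"
      using integrable_on_cmult_left[OF integrable_on_powr_from_0[of "\<gamma>-2" s0], of C] h by simp
  next
    fix k s assume s: "s \<in> {0..s0}"
    show "norm (fk k s) \<le> C * s powr (\<gamma>-2)"
    proof (cases "s \<in> {a k..s0}")
      case True
      then have "0 < s" using a[of k] by auto
      then show ?thesis using True b[of s] I_nonneg[of s] unfolding fk_def by auto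
    next
      case False then have "fk k s = 0" unfolding fk_def by (simp only: if_False)
      then show ?thesis using h by simp
    qed
  next
    fix s assume s: "s \<in> {0..s0}"
    show "(\<lambda>k. fk k s) \<longlonglongrightarrow> I s"
    proof (cases "s = 0")
      case True
      then have "\<And>k. fk k s = I s" unfolding fk_def using a I_0 by (auto simp: not_le)
      then show ?thesis by simp
    next
      case False
      then have sp: "s > 0" using s by simp
      obtain N :: nat where N: "s0 / s < real N" using reals_Archimedean2 by blast
      have "eventually (\<lambda>k. fk k s = I s) sequentially"
        unfolding eventually_sequentially
      proof (intro exI allI impI)
        fix k assume "N \<le> k"
        then have "s0 / s < real (Suc k)" using N by linarith
        then have "a k < s" unfolding a_def using sp h by (simp add: field_simps)
        then show "fk k s = I s" unfolding fk_def using s by auto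
      qed
      then show ?thesis by (rule tendsto_eventually)
    qed
  qed
  then show ?thesis using h by blast
qed

lemma I_int: assumes "\<rho> \<ge> 0" shows "I integrable_on {0..\<rho>}"
proof -
  obtain s0 where s0: "s0 > 0" "I integrable_on {0..s0}" using I_int0 by blast
  show ?thesis
  proof (cases "\<rho> \<le> s0")
    case True
    then show ?thesis using integrable_on_subinterval[OF s0(2), of 0 \<rho>] by simp
  next
    case False
    have "I integrable_on {s0..\<rho>}" by (rule integrable_continuous_interval[OF I_cont[OF s0(1)]])
    then show ?thesis
      using Henstock_Kurzweil_Integration.integrable_combine[of 0 s0 \<rho> I] s0 False by simp
  qed
qed

abbreviation "Q \<equiv> Qf P P'"

lemma Q0: "Q 0 = 0" unfolding Qf_I by simp

lemma Q_cont: "continuous_on {0..T} Q"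
proof (cases "T \<ge> 0")
  case True
  show ?thesis unfolding Qf_I by (rule indefinite_integral_continuous_1[OF I_int[OF True]])
next
  case False then show ?thesis by simp
qed

lemma Q_diff: assumes "0 \<le> a" "a \<le> b" shows "Q b - Q a = integral {a..b} I"
  using Henstock_Kurzweil_Integration.integral_combine[of 0 a b I] I_int[of b] assms unfolding Qf_I by simp

lemma Q_nonneg: "\<rho> \<ge> 0 \<Longrightarrow> Q \<rho> \<ge> 0"
  unfolding Qf_I by (rule integral_nonneg[OF I_int]) (auto intro: I_nonneg)

lemma I_lower: assumes "T > 0" shows "\<exists>c>0. \<forall>s. 0 < s \<and> s \<le> T \<longrightarrow> c \<le> I s"
proof -
  obtain s0 \<gamma> c C where h: "s0 > 0" "c > 0" "C > 0" "1 < \<gamma>" "\<gamma> < 2"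
    and b: "\<And>s. 0 < s \<Longrightarrow> s \<le> s0 \<Longrightarrow> c * s powr (\<gamma>-2) \<le> I s \<and> I s \<le> C * s powr (\<gamma>-2)"
    using I_near0 by blast
  define c1 where "c1 = c * s0 powr (\<gamma>-2)"
  have c1: "c1 > 0" unfolding c1_def using h by simp
  have l1: "c1 \<le> I s" if "0 < s" "s \<le> s0" for s
  proof -
    have "s0 powr (\<gamma>-2) \<le> s powr (\<gamma>-2)" by (rule powr_mono2') (use that h in auto)
    then have "c1 \<le> c * s powr (\<gamma>-2)" unfolding c1_def using h by simp
    then show ?thesis using b[OF that] by linarith
  qed
  show ?thesis
  proof (cases "T \<le> s0")
    case True then show ?thesis using l1 c1 by (intro exI[of _ c1]) auto
  next
    case False
    obtain x where x: "x \<in> {s0..T}" "\<And>y. y \<in> {s0..T} \<Longrightarrow> I x \<le> I y"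
      using continuous_attains_inf[OF compact_Icc _ I_cont[OF h(1)], of T] False by auto
    have Ix: "I x > 0" using I_pos[of x] x h by auto
    show ?thesis
    proof (intro exI[of _ "min c1 (I x)"] conjI allI impI)
      fix s assume s: "0 < s \<and> s \<le> T"
      show "min c1 (I x) \<le> I s"
      proof (cases "s \<le> s0")
        case True then show ?thesis using l1[of s] s by auto
      next
        case False then show ?thesis using x(2)[of s] s by auto
      qed
    qed (use c1 Ix in auto)
  qed
qed

lemma Q_lower: assumes "T > 0"
  shows "\<exists>c>0. \<forall>a b. 0 \<le> a \<and> a \<le> b \<and> b \<le> T \<longrightarrow> c * (b - a) \<le> Q b - Q a"
proof -
  obtain c where c: "c > 0" "\<And>s. 0 < s \<Longrightarrow> s \<le> T \<Longrightarrow> c \<le> I s" using I_lower[OF assms] by blast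
  have "c * (b - a) \<le> Q b - Q a" if ab: "0 \<le> a" "a \<le> b" "b \<le> T" for a b
  proof -
    define I' where "I' s = (if s = 0 then c else I s)" for s
    have Iab: "I integrable_on {a..b}" using integrable_on_subinterval[OF I_int[of b]] ab by auto
    have e: "integral {a..b} I = integral {a..b} I'"
      by (rule integral_spike[of "{0}"]) (auto simp: I'_def)
    have I'i: "I' integrable_on {a..b}"
      by (rule integrable_spike[OF Iab, of "{0}"]) (auto simp: I'_def)
    have "integral {a..b} (\<lambda>s. c) \<le> integral {a..b} I'"
      by (rule integral_le[OF _ I'i]) (use ab c in \<open>auto simp: I'_def\<close>)
    then show ?thesis using Q_diff[OF ab(1,2)] e ab by (simp add: mult.commute)
  qed
  then show ?thesis using c by blast
qed

end

context eosl begin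

lemma P_lower: "\<exists>cs \<rho>1. 0 < cs \<and> cs \<le> 1 \<and> \<rho>1 > 0 \<and> (\<forall>\<rho>\<ge>\<rho>1. cs\<^sup>2 * \<rho> / 2 \<le> P \<rho>)"
proof -
  obtain cs c2 where h: "0 < cs" "cs \<le> 1" "c2 > 0"
    and b: "\<And>p. p > 0 \<Longrightarrow> \<bar>p - cs\<^sup>2 * the_inv_into {0..} P p\<bar> \<le> c2 * sqrt p"
    using P3 by blast
  define \<rho>1 where "\<rho>1 = 2 * c2\<^sup>2 / cs\<^sup>2 + 1"
  have r1: "\<rho>1 > 0" unfolding \<rho>1_def using h by (simp add: add_pos_nonneg)
  have "cs\<^sup>2 * \<rho> / 2 \<le> P \<rho>" if r: "\<rho> \<ge> \<rho>1" for \<rho>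
  proof (rule ccontr)
    assume c: "\<not> cs\<^sup>2 * \<rho> / 2 \<le> P \<rho>"
    have rp: "\<rho> > 0" using r r1 by simp
    have Pp: "P \<rho> > 0" using P_pos[OF rp] .
    have inv: "the_inv_into {0..} P (P \<rho>) = \<rho>"
      by (rule the_inv_into_f_f[OF bij_betw_imp_inj_on[OF Pbij]]) (use rp in simp)
    have bb: "cs\<^sup>2 * \<rho> - P \<rho> \<le> c2 * sqrt (P \<rho>)" using b[OF Pp] unfolding inv by linarith
    define t where "t = sqrt (P \<rho>)"
    define u where "u = sqrt (cs\<^sup>2 * \<rho> / 2)"
    have up: "u > 0" unfolding u_def using h rp by simp
    have u2: "u\<^sup>2 = cs\<^sup>2 * \<rho> / 2" unfolding u_def using h rp by simp
    have tu: "t < u" unfolding t_def u_def using c by (simp add: real_sqrt_less_mono)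
    have "u\<^sup>2 \<le> c2 * t" using bb c u2 unfolding t_def by linarith
    also have "\<dots> < c2 * u" using tu h by simp
    finally have "u * u < c2 * u" by (simp add: power2_eq_square)
    then have "u < c2" using up by simp
    then have "u\<^sup>2 < c2\<^sup>2" using up by (simp add: power_strict_mono)
    then have "cs\<^sup>2 * \<rho> < 2 * c2\<^sup>2" using u2 by simp
    then have "\<rho> < 2 * c2\<^sup>2 / cs\<^sup>2" using h by (simp add: field_simps)
    then show False using r unfolding \<rho>1_def by simp
  qed
  then show ?thesis using h r1 by blast
qed

lemma Q_block:
  assumes cs: "0 < cs" "cs \<le> 1" and low: "\<And>\<rho>. \<rho> \<ge> \<rho>1 \<Longrightarrow> cs\<^sup>2 * \<rho> / 2 \<le> P \<rho>"
    and a: "a \<ge> \<rho>1" "\<rho>1 > 0"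
  shows "cs\<^sup>2/8 \<le> Q ((4/cs\<^sup>2) * a) - Q a"
proof -
  define lm where "lm = 4/cs\<^sup>2"
  have cs2: "cs\<^sup>2 > 0" "cs\<^sup>2 \<le> 1" using cs by (auto simp: power_le_one)
  have lam: "lm \<ge> 4" unfolding lm_def using cs2 by (simp add: field_simps)
  have ap: "a > 0" using a by simp
  define b where "b = lm * a"
  have ab: "a \<le> b" "b > 0" unfolding b_def using lam ap by auto
  have ftc: "(P' has_integral (P b - P a)) {a..b}"
  proof (rule fundamental_theorem_of_calculus[OF ab(1)])
    fix x assume x: "x \<in> {a..b}"
    have "(P has_real_derivative P' x) (at x within {a..b})"
      using has_field_derivative_subset[OF dP[of x], of "{a..b}"] x ap by fastforce
    then show "(P has_vector_derivative P' x) (at x within {a..b})"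
      by (simp add: has_real_derivative_iff_has_vector_derivative)
  qed
  define c where "c = 1 / (2*b)"
  have cpos: "c > 0" unfolding c_def using ab by simp
  have i2: "((\<lambda>s. P' s * c) has_integral ((P b - P a) * c)) {a..b}"
    by (rule has_integral_mult_left[OF ftc])
  have Iab: "I integrable_on {a..b}" using integrable_on_subinterval[OF I_int[of b]] ab ap by auto
  have le: "P' s * c \<le> I s" if s: "s \<in> {a..b}" for s
  proof -
    have sp: "s > 0" using s ap by simp
    have "P' s / (2*b) \<le> P' s / (s + P s)"
      by (rule divide_left_mono) (use P_le[of s] P_pos[OF sp] P'pos[OF sp] s sp in auto)
    then show ?thesis unfolding I_def c_def by simp
  qed
  have e: "integral {a..b} (\<lambda>s. P' s * c) = (P b - P a) * c" by (rule integral_unique[OF i2])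
  have "integral {a..b} (\<lambda>s. P' s * c) \<le> integral {a..b} I"
    by (rule integral_le[OF has_integral_integrable[OF i2] Iab le])
  then have "(P b - P a) * c \<le> integral {a..b} I" using e by linarith
  moreover have "Q b - Q a = integral {a..b} I" using Q_diff ab ap by simp
  moreover have "P b \<ge> 2 * a"
  proof -
    have "b \<ge> \<rho>1" using ab a by simp
    then have "cs\<^sup>2 * b / 2 \<le> P b" by (rule low)
    moreover have "cs\<^sup>2 * b / 2 = 2 * a" unfolding b_def lm_def using cs2 by (simp add: field_simps)
    ultimately show ?thesis by simp
  qed
  moreover have "P a \<le> a" using P_le ap by simp
  ultimately have "a * c \<le> Q b - Q a" using cpos by (smt (verit) mult_right_mono)
  moreover have "a * c = cs\<^sup>2/8" unfolding c_def b_def lm_def using ap cs2 by (simp add: field_simps)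
  ultimately show ?thesis unfolding b_def lm_def by simp
qed

lemma Q_unbounded: "\<exists>\<rho>\<ge>0. Y \<le> Q \<rho>"
proof -
  obtain cs \<rho>1 where h: "0 < cs" "cs \<le> 1" "\<rho>1 > 0" and low: "\<And>\<rho>. \<rho> \<ge> \<rho>1 \<Longrightarrow> cs\<^sup>2 * \<rho> / 2 \<le> P \<rho>"
    using P_lower by blast
  define lm where "lm = 4/cs\<^sup>2"
  have cs2: "cs\<^sup>2 > 0" "cs\<^sup>2 \<le> 1" using h by (auto simp: power_le_one)
  have lam: "lm \<ge> 1" unfolding lm_def using cs2 by (simp add: field_simps)
  have ind: "\<rho>1 * lm^n \<ge> \<rho>1 \<and> real n * (cs\<^sup>2/8) \<le> Q (\<rho>1 * lm^n)" for n
  proof (induction n)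
    case 0 then show ?case using Q_nonneg h by simp
  next
    case (Suc n)
    have g: "\<rho>1 * lm^n \<ge> \<rho>1" using Suc by simp
    have "\<rho>1 * lm^Suc n = lm * (\<rho>1 * lm^n)" by simp
    moreover have "cs\<^sup>2/8 \<le> Q (lm * (\<rho>1 * lm^n)) - Q (\<rho>1 * lm^n)"
      using Q_block[OF h(1,2) low g h(3)] unfolding lm_def by simp
    moreover have "\<rho>1 * lm^n \<le> lm * (\<rho>1 * lm^n)" using lam g h(3) mult_right_mono[OF lam, of "\<rho>1 * lm^n"] by simp
    ultimately show ?case using Suc g by (auto simp: algebra_simps)
  qed
  obtain n :: nat where n: "Y / (cs\<^sup>2/8) < real n" using reals_Archimedean2 by blast
  have "Y \<le> real n * (cs\<^sup>2/8)" using n cs2 by (simp add: field_simps)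
  then show ?thesis using ind[of n] h by (intro exI[of _ "\<rho>1 * lm^n"]) auto
qed

end

context eosl begin

abbreviation "g \<equiv> gf P P'"

lemma Q_strict: assumes "0 \<le> a" "a < b" shows "Q a < Q b"
proof -
  obtain c where c: "c > 0" "\<And>a' b'. 0 \<le> a' \<and> a' \<le> b' \<and> b' \<le> b \<longrightarrow> c * (b' - a') \<le> Q b' - Q a'"
    using Q_lower[of b] assms by auto
  have "c * (b - a) \<le> Q b - Q a" using c(2)[of a b] assms by simp
  moreover have "c * (b - a) > 0" using c assms by simp
  ultimately show ?thesis by simp
qed

lemma Q_inj: "inj_on Q {0<..}"
proof (rule inj_onI)
  fix x y assume "x \<in> {0<..}" "y \<in> {0<..}" "Q x = Q y"
  then show "x = y" using Q_strict[of x y] Q_strict[of y x] by (cases x y rule: linorder_cases) auto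
qed

lemma Q_surj: assumes "y > 0" shows "y \<in> Q ` {0<..}"
proof -
  obtain r where r: "r \<ge> 0" "y \<le> Q r" using Q_unbounded by blast
  obtain x where x: "0 \<le> x" "x \<le> r" "Q x = y"
    using IVT'[of Q 0 y r] Q0 assms r Q_cont[of r] by auto
  have "x \<noteq> 0" using x assms Q0 by auto
  then show ?thesis using x by force
qed

lemma g_pos: assumes "y > 0" shows "g y > 0" "Q (g y) = y"
proof -
  have g: "g y = the_inv_into {0<..} Q y" unfolding gf_def using assms by simp
  show "g y > 0" unfolding g using the_inv_into_into[OF Q_inj Q_surj[OF assms], of "{0<..}"] by simp
  show "Q (g y) = y" unfolding g by (rule f_the_inv_into_f[OF Q_inj Q_surj[OF assms]])
qed

lemma g_nonpos: "y \<le> 0 \<Longrightarrow> g y = 0" unfolding gf_def by simp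

lemma g_nonneg: "g y \<ge> 0" using g_pos[of y] g_nonpos[of y] by (cases "y > 0") auto

lemma g_mono: assumes "a \<le> b" shows "g a \<le> g b"
proof (cases "a > 0")
  case True
  show ?thesis
  proof (rule ccontr)
    assume "\<not> g a \<le> g b"
    then have "Q (g b) < Q (g a)" using Q_strict[of "g b" "g a"] g_pos[of b] True assms by simp
    then show False using g_pos[of a] g_pos[of b] True assms by simp
  qed
next
  case False then show ?thesis using g_nonpos[of a] g_nonneg[of b] by simp
qed

lemma g_lip: "\<exists>L>0. \<forall>a b. a \<le> Y \<longrightarrow> b \<le> Y \<longrightarrow> \<bar>g a - g b\<bar> \<le> L * \<bar>a - b\<bar>"
proof (cases "Y > 0")
  case False
  then show ?thesis using g_nonpos by (intro exI[of _ 1]) auto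
next
  case True
  define T where "T = g Y"
  have T: "T > 0" unfolding T_def using g_pos True by simp
  obtain c where c: "c > 0" "\<And>a b. 0 \<le> a \<and> a \<le> b \<and> b \<le> T \<longrightarrow> c * (b - a) \<le> Q b - Q a"
    using Q_lower[OF T] by blast
  have key: "g b - g a \<le> (1/c) * (b - a)" if ab: "a \<le> b" "b \<le> Y" for a b
  proof (cases "b > 0")
    case False then show ?thesis using g_nonpos[of a] g_nonpos[of b] ab c(1) by simp
  next
    case bp: True
    have gbT: "g b \<le> T" unfolding T_def by (rule g_mono[OF ab(2)])
    show ?thesis
    proof (cases "a > 0")
      case True
      have "c * (g b - g a) \<le> Q (g b) - Q (g a)"
        using c(2)[of "g a" "g b"] g_mono[OF ab(1)] g_nonneg[of a] gbT by simp
      then have "c * (g b - g a) \<le> b - a" using g_pos[OF True] g_pos[OF bp] by simp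
      then show ?thesis using c by (simp add: field_simps)
    next
      case False
      have "c * (g b - 0) \<le> Q (g b) - Q 0" using c(2)[of 0 "g b"] g_nonneg[of b] gbT by simp
      then have "c * g b \<le> b" using g_pos[OF bp] Q0 by simp
      then have "g b \<le> b / c" using c by (simp add: field_simps)
      also have "\<dots> \<le> (b - a) / c" using False c by (simp add: divide_right_mono)
      finally show ?thesis using g_nonpos[of a] False by simp
    qed
  qed
  have "\<bar>g a - g b\<bar> \<le> (1/c) * \<bar>a - b\<bar>" if "a \<le> Y" "b \<le> Y" for a b
  proof (cases "a \<le> b")
    case True then show ?thesis using key[of a b] g_mono[of a b] that by (simp add: abs_if)
  next
    case False then show ?thesis using key[of b a] g_mono[of b a] that by (simp add: abs_if)
  qed
  then show ?thesis using c by (intro exI[of _ "1/c"]) auto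
qed

lemma g_cont: "continuous_on UNIV g"
proof -
  have "continuous (at x) g" for x
  proof -
    obtain L where L: "L > 0" "\<And>a b. a \<le> x + 1 \<Longrightarrow> b \<le> x + 1 \<Longrightarrow> \<bar>g a - g b\<bar> \<le> L * \<bar>a - b\<bar>"
      using g_lip[of "x+1"] by blast
    show ?thesis unfolding continuous_at_eps_delta
    proof (intro allI impI)
      fix e :: real assume e: "e > 0"
      show "\<exists>d>0. \<forall>x'. dist x' x < d \<longrightarrow> dist (g x') (g x) < e"
      proof (intro exI[of _ "min 1 (e/(2*L))"] conjI allI impI)
        fix x' assume d: "dist x' x < min 1 (e/(2*L))"
        then have "x' \<le> x + 1" by (auto simp: dist_real_def)
        then have "\<bar>g x' - g x\<bar> \<le> L * \<bar>x' - x\<bar>" using L(2) by simp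
        also have "\<dots> \<le> L * (e/(2*L))" using d L by (intro mult_left_mono) (auto simp: dist_real_def)
        also have "\<dots> < e" using L e by (simp add: field_simps)
        finally show "dist (g x') (g x) < e" by (simp add: dist_real_def)
      qed (use e L in auto)
    qed
  qed
  then show ?thesis by (simp add: continuous_at_imp_continuous_on)
qed

end

lemma within_to_at:
  fixes f :: "real \<Rightarrow> real"
  assumes "(f has_real_derivative D) (at x within {a..})" "a < x"
  shows "(f has_real_derivative D) (at x)"
proof -
  have "(f has_real_derivative D) (at x within {a<..})"
    using has_field_derivative_subset[OF assms(1), of "{a<..}"] by fastforce
  moreover have "at x within {a<..} = at x" by (rule at_within_open) (use assms in simp_all)
  ultimately show ?thesis by simp
qed

lemma within_Icc_to_at:
  fixes f :: "real \<Rightarrow> real"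
  assumes "(f has_real_derivative D) (at x within {a..b})" "a < x" "x < b"
  shows "(f has_real_derivative D) (at x)"
proof -
  have "(f has_real_derivative D) (at x within {a<..<b})"
    using has_field_derivative_subset[OF assms(1), of "{a<..<b}"] by fastforce
  moreover have "at x within {a<..<b} = at x" by (rule at_within_open) (use assms in simp_all)
  ultimately show ?thesis by simp
qed

definition FF :: "real \<Rightarrow> real \<Rightarrow> real \<Rightarrow> real" where
  "FF m p r = - (1 / (1 - 2 * m / r)) * (m / r\<^sup>2 + 4 * pi * r * p)"

lemma FF_0: "FF m p 0 = 0" unfolding FF_def by simp

context eosl begin

lemma sol_y0: "tov_sol P P' \<kappa> y \<Longrightarrow> y 0 = \<kappa>" unfolding tov_sol_def by blast
lemma sol_m2: "tov_sol P P' \<kappa> y \<Longrightarrow> r > 0 \<Longrightarrow> 2 * massf P P' y r < r" unfolding tov_sol_def by blast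
lemma sol_dy: "tov_sol P P' \<kappa> y \<Longrightarrow> r \<ge> 0 \<Longrightarrow>
   (y has_real_derivative FF (massf P P' y r) (P (g (y r))) r) (at r within {0..})"
  unfolding tov_sol_def FF_def by blast

lemma sol_dy_Icc: "tov_sol P P' \<kappa> y \<Longrightarrow> 0 \<le> a \<Longrightarrow> r \<in> {a..b} \<Longrightarrow>
   (y has_real_derivative FF (massf P P' y r) (P (g (y r))) r) (at r within {a..b})"
  using has_field_derivative_subset[OF sol_dy[of \<kappa> y r], of "{a..b}"] by fastforce

lemma sol_ycont: "tov_sol P P' \<kappa> y \<Longrightarrow> continuous_on {0..} y"
  unfolding continuous_on_eq_continuous_within using DERIV_continuous[OF sol_dy] by simp

lemma sol_ycont': "tov_sol P P' \<kappa> y \<Longrightarrow> continuous_on {0..b} y"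
  by (rule continuous_on_subset[OF sol_ycont]) auto

lemma integrand_cont: "tov_sol P P' \<kappa> y \<Longrightarrow> continuous_on {0..b} (\<lambda>s. s\<^sup>2 * g (y s))"
proof -
  assume s: "tov_sol P P' \<kappa> y"
  have "continuous_on {0..b} (g \<circ> y)"
    by (rule continuous_on_compose[OF sol_ycont'[OF s]]) (rule continuous_on_subset[OF g_cont], simp)
  then show ?thesis by (intro continuous_intros) (simp add: o_def)
qed

lemma sol_dm: assumes s: "tov_sol P P' \<kappa> y" and r: "r \<in> {0..b}"
  shows "(massf P P' y has_real_derivative 4 * pi * (r\<^sup>2 * g (y r))) (at r within {0..b})"
proof -
  have "((\<lambda>x. integral {0..x} (\<lambda>s. s\<^sup>2 * g (y s))) has_real_derivative r\<^sup>2 * g (y r)) (at r within {0..b})"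
    by (rule integral_has_real_derivative[OF integrand_cont[OF s] r])
  then show ?thesis unfolding massf_def[abs_def] by (intro DERIV_cmult)
qed

lemma sol_dm_Icc: assumes s: "tov_sol P P' \<kappa> y" and r: "r \<in> {a..b}" "0 \<le> a"
  shows "(massf P P' y has_real_derivative 4 * pi * (r\<^sup>2 * g (y r))) (at r within {a..b})"
  using has_field_derivative_subset[OF sol_dm[OF s, of r b], of "{a..b}"] r by fastforce

lemma sol_mcont: "tov_sol P P' \<kappa> y \<Longrightarrow> continuous_on {0..b} (massf P P' y)"
  unfolding continuous_on_eq_continuous_within using DERIV_continuous[OF sol_dm] by blast

lemma sol_m0: "massf P P' y 0 = 0" unfolding massf_def by simp

lemma sol_m_nonneg: "tov_sol P P' \<kappa> y \<Longrightarrow> r \<ge> 0 \<Longrightarrow> massf P P' y r \<ge> 0"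
  unfolding massf_def
  by (intro mult_nonneg_nonneg integral_nonneg integrable_continuous_interval integrand_cont)
     (auto intro: g_nonneg)

lemma sol_FF_nonpos: assumes s: "tov_sol P P' \<kappa> y" and r: "r \<ge> 0"
  shows "FF (massf P P' y r) (P (g (y r))) r \<le> 0"
proof (cases "r = 0")
  case True then show ?thesis by (simp add: FF_0)
next
  case False
  then have rp: "r > 0" using r by simp
  have m: "massf P P' y r \<ge> 0" "2 * massf P P' y r < r" using sol_m_nonneg[OF s r] sol_m2[OF s rp] by auto
  have "1 - 2 * massf P P' y r / r > 0" using m rp by (simp add: field_simps)
  moreover have "massf P P' y r / r\<^sup>2 + 4 * pi * r * P (g (y r)) \<ge> 0"
    using m rp P_nonneg[OF g_nonneg] by simp
  ultimately show ?thesis unfolding FF_def by (simp add: mult_nonneg_nonneg)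
qed

lemma sol_anti: assumes s: "tov_sol P P' \<kappa> y" and ab: "0 \<le> a" "a \<le> b"
  shows "y b \<le> y a"
proof (rule DERIV_nonpos_imp_decreasing_open[OF ab(2)])
  fix x assume x: "a < x" "x < b"
  then have "x > 0" using ab by simp
  then show "\<exists>z. (y has_real_derivative z) (at x) \<and> z \<le> 0"
    using within_to_at[OF sol_dy[OF s], of x] sol_FF_nonpos[OF s, of x] by auto
next
  show "continuous_on {a..b} y" by (rule continuous_on_subset[OF sol_ycont[OF s]]) (use ab in auto)
qed

lemma sol_le: "tov_sol P P' \<kappa> y \<Longrightarrow> r \<ge> 0 \<Longrightarrow> y r \<le> \<kappa>"
  using sol_anti[of \<kappa> y 0 r] sol_y0 by auto

end

lemma FF_alt: assumes "r > 0" "r - 2*m > 0"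
  shows "FF m p r = - (m + 4*pi*r^3*p) / (r * (r - 2*m))"
  using assms unfolding FF_def by (simp add: field_simps power2_eq_square power3_eq_cube)

lemma FF_bound:
  assumes r: "0 < r" "r \<le> T" and m: "0 \<le> m" "m \<le> Cm * r^3"
    and p: "0 \<le> p" "p \<le> Pm" and B: "\<beta>*r \<le> r - 2*m" "\<beta> > 0"
  shows "\<bar>FF m p r\<bar> \<le> (Cm + 4*pi*Pm) * T / \<beta>"
proof -
  have Bp: "r - 2*m > 0" using B r by (smt (verit) mult_pos_pos)
  have num: "0 \<le> m + 4*pi*r^3*p" using m p r by simp
  have "\<bar>FF m p r\<bar> = (m + 4*pi*r^3*p) / (r * (r - 2*m))"
    using FF_alt[OF r(1) Bp] num Bp r by (simp add: abs_div)
  also have "\<dots> \<le> (m + 4*pi*r^3*p) / (r * (\<beta>*r))"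
    by (rule divide_left_mono) (use num B r Bp in \<open>auto intro: mult_left_mono\<close>)
  also have "\<dots> \<le> (Cm*r^3 + 4*pi*r^3*Pm) / (r * (\<beta>*r))"
    by (rule divide_right_mono) (use m p r B in \<open>auto intro: add_mono mult_left_mono\<close>)
  also have "\<dots> = (Cm + 4*pi*Pm) * r / \<beta>" using r B by (simp add: field_simps power3_eq_cube)
  also have "\<dots> \<le> (Cm + 4*pi*Pm) * T / \<beta>"
  proof -
    have "Cm \<ge> 0" using m r by (smt (verit) mult_nonneg_nonneg zero_less_power mult_pos_pos
        zero_le_mult_iff)
    then have "(Cm + 4*pi*Pm) \<ge> 0" using p by simp
    then show ?thesis using r B by (intro divide_right_mono mult_left_mono) auto
  qed
  finally show ?thesis .
qed

lemma FF_lip: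
  assumes r: "0 < r" "r \<le> T" and m: "0 \<le> m1" "m1 \<le> Cm * r^3" "0 \<le> m2"
    and p: "0 \<le> p1" "p1 \<le> Pm" "0 \<le> p2"
    and B: "\<beta>*r \<le> r - 2*m1" "\<beta>*r \<le> r - 2*m2" "\<beta> > 0"
  shows "\<bar>FF m1 p1 r - FF m2 p2 r\<bar> \<le> (1 + 8*pi*T\<^sup>2*Pm)/\<beta>\<^sup>2 * (\<bar>m1-m2\<bar>/r\<^sup>2)
          + (4*pi*T + 8*pi*Cm*T^3)/\<beta>\<^sup>2 * \<bar>p1-p2\<bar>"
proof -
  define B1 where "B1 = r - 2*m1"
  define B2 where "B2 = r - 2*m2"
  have br: "\<beta>*r > 0" using B r by simp
  have B1: "B1 \<ge> \<beta>*r" "B1 > 0" unfolding B1_def using B br by linarith+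
  have B2: "B2 \<ge> \<beta>*r" "B2 > 0" unfolding B2_def using B br by linarith+
  have Cm: "Cm \<ge> 0" using m r by (smt (verit) zero_le_mult_iff zero_less_power)
  have Pm: "Pm \<ge> 0" using p by simp
  define N where "N = (m1-m2)*(r + 8*pi*r^3*p1) + (p1-p2)*(4*pi*r^4 - 8*pi*r^3*m1)"
  have rB: "r*B1*B2 \<noteq> 0" using r B1 B2 by simp
  have e1: "FF m1 p1 r * (r*B1) = -(m1 + 4*pi*r^3*p1)"
    unfolding FF_alt[OF r(1) B1(2)[unfolded B1_def]] using r B1 unfolding B1_def by simp
  have e2: "FF m2 p2 r * (r*B2) = -(m2 + 4*pi*r^3*p2)"
    unfolding FF_alt[OF r(1) B2(2)[unfolded B2_def]] using r B2 unfolding B2_def by simp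
  have "(FF m1 p1 r - FF m2 p2 r) * (r*B1*B2) = (FF m1 p1 r * (r*B1))*B2 - (FF m2 p2 r * (r*B2))*B1"
    by (simp add: algebra_simps)
  also have "\<dots> = -(m1 + 4*pi*r^3*p1)*B2 + (m2 + 4*pi*r^3*p2)*B1" unfolding e1 e2 by (simp add: algebra_simps)
  also have "\<dots> = -N" unfolding N_def B1_def B2_def by (simp add: algebra_simps eval_nat_numeral)
  finally have diff: "FF m1 p1 r - FF m2 p2 r = - N / (r*B1*B2)" using rB by (metis minus_divide_left nonzero_mult_div_cancel_right)
  have den: "r*B1*B2 \<ge> \<beta>\<^sup>2 * r^3"
  proof -
    have "r*(\<beta>*r)*(\<beta>*r) \<le> r*B1*B2" using B1 B2 r B by (intro mult_mono) auto
    then show ?thesis by (simp add: power2_eq_square power3_eq_cube algebra_simps)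
  qed
  have dpos: "\<beta>\<^sup>2 * r^3 > 0" using B r by simp
  have N1: "\<bar>r + 8*pi*r^3*p1\<bar> \<le> r + 8*pi*r^3*Pm" using r p by simp
  have N2: "\<bar>4*pi*r^4 - 8*pi*r^3*m1\<bar> \<le> 4*pi*r^4 + 8*pi*Cm*r^6"
  proof -
    have "8*pi*r^3*m1 \<le> 8*pi*r^3*(Cm*r^3)" using m r by simp
    also have "\<dots> = 8*pi*Cm*r^6" by (simp add: power_add[symmetric])
    finally have a: "8*pi*r^3*m1 \<le> 8*pi*Cm*r^6" .
    have b: "0 \<le> 8*pi*r^3*m1" "0 \<le> 4*pi*r^4" using m r by simp_all
    show ?thesis unfolding abs_le_iff using a b by linarith
  qed
  have "\<bar>N\<bar> \<le> \<bar>m1-m2\<bar>*(r + 8*pi*r^3*Pm) + \<bar>p1-p2\<bar>*(4*pi*r^4 + 8*pi*Cm*r^6)"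
  proof -
    have "\<bar>N\<bar> \<le> \<bar>(m1-m2)*(r + 8*pi*r^3*p1)\<bar> + \<bar>(p1-p2)*(4*pi*r^4 - 8*pi*r^3*m1)\<bar>"
      unfolding N_def by (rule abs_triangle_ineq)
    also have "\<dots> = \<bar>m1-m2\<bar>*\<bar>r + 8*pi*r^3*p1\<bar> + \<bar>p1-p2\<bar>*\<bar>4*pi*r^4 - 8*pi*r^3*m1\<bar>"
      by (simp add: abs_mult)
    also have "\<dots> \<le> \<bar>m1-m2\<bar>*(r + 8*pi*r^3*Pm) + \<bar>p1-p2\<bar>*(4*pi*r^4 + 8*pi*Cm*r^6)"
      by (intro add_mono mult_left_mono N1 N2) auto
    finally show ?thesis .
  qed
  then have "\<bar>N\<bar> / (\<beta>\<^sup>2 * r^3) \<le> (\<bar>m1-m2\<bar>*(r + 8*pi*r^3*Pm) + \<bar>p1-p2\<bar>*(4*pi*r^4 + 8*pi*Cm*r^6)) / (\<beta>\<^sup>2 * r^3)"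
    using dpos by (simp add: divide_right_mono)
  also have "\<dots> = (1 + 8*pi*r\<^sup>2*Pm)/\<beta>\<^sup>2 * (\<bar>m1-m2\<bar>/r\<^sup>2) + (4*pi*r + 8*pi*Cm*r^3)/\<beta>\<^sup>2 * \<bar>p1-p2\<bar>"
    using r B by (simp add: field_simps power2_eq_square power3_eq_cube power_numeral_reduce)
  also have "\<dots> \<le> (1 + 8*pi*T\<^sup>2*Pm)/\<beta>\<^sup>2 * (\<bar>m1-m2\<bar>/r\<^sup>2) + (4*pi*T + 8*pi*Cm*T^3)/\<beta>\<^sup>2 * \<bar>p1-p2\<bar>"
  proof -
    have h1: "1 + 8*pi*r\<^sup>2*Pm \<le> 1 + 8*pi*T\<^sup>2*Pm" using r Pm by (simp add: power_mono mult_right_mono)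
    have h2: "4*pi*r + 8*pi*Cm*r^3 \<le> 4*pi*T + 8*pi*Cm*T^3"
      using r Cm by (intro add_mono) (auto intro!: mult_left_mono power_mono)
    have "(1 + 8*pi*r\<^sup>2*Pm)/\<beta>\<^sup>2 * (\<bar>m1-m2\<bar>/r\<^sup>2) \<le> (1 + 8*pi*T\<^sup>2*Pm)/\<beta>\<^sup>2 * (\<bar>m1-m2\<bar>/r\<^sup>2)"
      by (rule mult_right_mono[OF divide_right_mono[OF h1]]) auto
    moreover have "(4*pi*r + 8*pi*Cm*r^3)/\<beta>\<^sup>2 * \<bar>p1-p2\<bar> \<le> (4*pi*T + 8*pi*Cm*T^3)/\<beta>\<^sup>2 * \<bar>p1-p2\<bar>"
      by (rule mult_right_mono[OF divide_right_mono[OF h2]]) auto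
    ultimately show ?thesis by linarith
  qed
  finally have X: "\<bar>N\<bar> / (\<beta>\<^sup>2 * r^3) \<le> (1 + 8*pi*T\<^sup>2*Pm)/\<beta>\<^sup>2 * (\<bar>m1-m2\<bar>/r\<^sup>2) + (4*pi*T + 8*pi*Cm*T^3)/\<beta>\<^sup>2 * \<bar>p1-p2\<bar>" .
  have "\<bar>FF m1 p1 r - FF m2 p2 r\<bar> = \<bar>N\<bar> / (r*B1*B2)" unfolding diff using r B1 B2 by (simp add: abs_div)
  also have "\<dots> \<le> \<bar>N\<bar> / (\<beta>\<^sup>2 * r^3)" by (rule divide_left_mono[OF den]) (use dpos r B1 B2 in auto)
  finally show ?thesis using X by linarith
qed

lemma gronwall_fwd_aux:
  fixes D :: "real \<Rightarrow> real"
  assumes ab: "a \<le> b" and d: "\<delta> > 0" and cont: "continuous_on {a..b} D"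
    and nn: "\<And>r. r \<in> {a..b} \<Longrightarrow> D r \<ge> 0"
    and step: "\<And>s t W r. a \<le> s \<Longrightarrow> s \<le> t \<Longrightarrow> t \<le> b \<Longrightarrow> t - s \<le> \<delta> \<Longrightarrow>
       (\<forall>r\<in>{a..t}. D r \<le> W) \<Longrightarrow> r \<in> {s..t} \<Longrightarrow> D r \<le> D s + W/2"
  shows "\<forall>r\<in>{a..min b (a + real n * \<delta>)}. D r \<le> 2^n * D a"
proof (induction n)
  case 0
  then show ?case using ab by auto
next
  case (Suc n)
  define s where "s = min b (a + real n * \<delta>)"
  define t where "t = min b (a + real (Suc n) * \<delta>)"
  have st: "a \<le> s" "s \<le> t" "t \<le> b" "t - s \<le> \<delta>"
    unfolding s_def t_def using ab d by (auto simp: min_def algebra_simps)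
  obtain x where x: "x \<in> {a..t}" "\<And>y. y \<in> {a..t} \<Longrightarrow> D y \<le> D x"
    using continuous_attains_sup[OF compact_Icc _ continuous_on_subset[OF cont], of a t] st by auto
  have Da: "D a \<ge> 0" using nn ab by simp
  have IH: "\<And>r. r \<in> {a..s} \<Longrightarrow> D r \<le> 2^n * D a" using Suc unfolding s_def by blast
  have W: "D x \<le> 2^Suc n * D a"
  proof (cases "x \<le> s")
    case True
    then have "D x \<le> 2^n * D a" using IH x by auto
    also have "\<dots> \<le> 2^Suc n * D a" using Da by simp
    finally show ?thesis .
  next
    case False
    then have "D x \<le> D s + D x / 2" using step[OF st, of "D x" x] x by auto
    then have "D x \<le> 2 * D s" by simp
    also have "\<dots> \<le> 2 * (2^n * D a)" using IH[of s] st by simp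
    finally show ?thesis by simp
  qed
  have "\<forall>r\<in>{a..t}. D r \<le> 2^Suc n * D a"
  proof
    fix r assume "r \<in> {a..t}"
    then have "D r \<le> D x" by (rule x(2))
    then show "D r \<le> 2^Suc n * D a" using W by linarith
  qed
  then show ?case unfolding t_def .
qed

lemma gronwall_fwd:
  fixes D :: "real \<Rightarrow> real"
  assumes ab: "a \<le> b" and d: "\<delta> > 0" and cont: "continuous_on {a..b} D"
    and nn: "\<And>r. r \<in> {a..b} \<Longrightarrow> D r \<ge> 0"
    and step: "\<And>s t W r. a \<le> s \<Longrightarrow> s \<le> t \<Longrightarrow> t \<le> b \<Longrightarrow> t - s \<le> \<delta> \<Longrightarrow>
       (\<forall>r\<in>{a..t}. D r \<le> W) \<Longrightarrow> r \<in> {s..t} \<Longrightarrow> D r \<le> D s + W/2"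
    and n: "b - a \<le> real n * \<delta>"
    and r: "r \<in> {a..b}"
  shows "D r \<le> 2^n * D a"
proof -
  have e: "min b (a + real n * \<delta>) = b" using n by (intro min_absorb1) linarith
  have "\<forall>r\<in>{a..min b (a + real n * \<delta>)}. D r \<le> 2^n * D a"
    by (rule gronwall_fwd_aux[OF ab d cont nn step])
  then have "\<forall>r\<in>{a..b}. D r \<le> 2^n * D a" unfolding e .
  then show ?thesis using r by blast
qed

lemma gronwall_bwd:
  fixes D :: "real \<Rightarrow> real"
  assumes ab: "a \<le> b" and d: "\<delta> > 0" and cont: "continuous_on {a..b} D"
    and nn: "\<And>r. r \<in> {a..b} \<Longrightarrow> D r \<ge> 0"
    and step: "\<And>s t W r. a \<le> s \<Longrightarrow> s \<le> t \<Longrightarrow> t \<le> b \<Longrightarrow> t - s \<le> \<delta> \<Longrightarrow>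
       (\<forall>r\<in>{s..b}. D r \<le> W) \<Longrightarrow> r \<in> {s..t} \<Longrightarrow> D r \<le> D t + W/2"
    and n: "b - a \<le> real n * \<delta>"
    and r: "r \<in> {a..b}"
  shows "D r \<le> 2^n * D b"
proof -
  define E where "E x = D (- x)" for x
  have c: "continuous_on {-b..-a} E" unfolding E_def
    by (rule continuous_on_compose2[OF cont]) (auto intro: continuous_intros)
  have "E (-r) \<le> 2^n * E (-b)"
  proof (rule gronwall_fwd[where \<delta>=\<delta> and a="-b" and b="-a" and n=n])
    fix s t W x assume h: "-b \<le> s" "s \<le> t" "t \<le> -a" "t - s \<le> \<delta>" "\<forall>r\<in>{-b..t}. E r \<le> W" "x \<in> {s..t}"
    have "\<forall>r\<in>{-t..b}. D r \<le> W"
    proof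
      fix r assume "r \<in> {-t..b}"
      then have "-r \<in> {-b..t}" by auto
      then show "D r \<le> W" using h(5) unfolding E_def by (metis minus_minus)
    qed
    then have "D (-x) \<le> D (-s) + W/2" using step[of "-t" "-s" W "-x"] h by auto
    then show "E x \<le> E s + W/2" unfolding E_def by simp
  next
    show "-b \<le> -a" using ab by simp
  next
    show "continuous_on {-b..-a} E" by (rule c)
  next
    fix x assume "x \<in> {-b..-a}"
    then show "E x \<ge> 0" unfolding E_def using nn[of "-x"] by simp
  next
    show "-a - -b \<le> real n * \<delta>" using n by simp
  next
    show "-r \<in> {-b..-a}" using r by simp
  qed (rule d)
  then show ?thesis unfolding E_def by simp
qed

locale mainl = eosl +
  fixes y :: "real \<Rightarrow> real \<Rightarrow> real" and R M :: "real \<Rightarrow> real" and \<kappa>0 :: real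
  assumes sol: "\<And>\<kappa>. \<kappa> > 0 \<Longrightarrow> tov_sol P P' \<kappa> (y \<kappa>)"
    and radius: "\<And>\<kappa>. \<kappa> > 0 \<Longrightarrow> R \<kappa> > 0 \<and> y \<kappa> (R \<kappa>) = 0"
    and mass: "\<And>\<kappa>. \<kappa> > 0 \<Longrightarrow> M \<kappa> = massf P P' (y \<kappa>) (R \<kappa>)"
    and k0: "\<kappa>0 > 0"
begin

abbreviation m where "m k \<equiv> massf P P' (y k)"

lemma M_pos: assumes k: "k > 0" shows "M k > 0"
proof -
  have s: "tov_sol P P' k (y k)" using sol k by simp
  have "continuous (at 0 within {0..}) (y k)" using sol_ycont[OF s] by (simp add: continuous_on_eq_continuous_within)
  then obtain d where d: "d > 0" "\<And>r. r \<in> {0..} \<Longrightarrow> dist r 0 < d \<Longrightarrow> dist (y k r) (y k 0) < k/2"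
    unfolding continuous_within_eps_delta using k by (meson half_gt_zero)
  have y0: "y k 0 = k" using sol_y0[OF s] .
  have yb: "y k r > k/2" if "0 \<le> r" "r < d" for r
  proof -
    have "\<bar>y k r - k\<bar> < k/2" using d(2)[of r] that y0 by (auto simp: dist_real_def)
    then show ?thesis unfolding abs_less_iff by linarith
  qed
  have Rk: "R k > 0" "y k (R k) = 0" using radius k by auto
  have Rd: "R k \<ge> d" using yb[of "R k"] Rk k by force
  define r1 where "r1 = d/2"
  have r1: "0 < r1" "r1 < d" "r1 \<le> R k" unfolding r1_def using d Rd by auto
  have "m k 0 < m k r1"
  proof (rule DERIV_pos_imp_increasing_open[OF r1(1)])
    fix x assume x: "0 < x" "x < r1"
    have "(m k has_real_derivative 4 * pi * (x\<^sup>2 * g (y k x))) (at x)"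
      by (rule within_Icc_to_at[OF sol_dm[OF s, of x r1]]) (use x in auto)
    moreover have "4 * pi * (x\<^sup>2 * g (y k x)) > 0" using g_pos(1)[of "y k x"] yb[of x] x r1 k by simp
    ultimately show "\<exists>z. (m k has_real_derivative z) (at x) \<and> z > 0" by blast
  next
    show "continuous_on {0..r1} (m k)" by (rule sol_mcont[OF s])
  qed
  moreover have "m k r1 \<le> m k (R k)"
  proof (rule DERIV_nonneg_imp_increasing_open[OF r1(3)])
    fix x assume x: "r1 < x" "x < R k"
    have "(m k has_real_derivative 4 * pi * (x\<^sup>2 * g (y k x))) (at x)"
      by (rule within_Icc_to_at[OF sol_dm[OF s, of x "R k"]]) (use x r1 in auto)
    moreover have "4 * pi * (x\<^sup>2 * g (y k x)) \<ge> 0" using g_nonneg[of "y k x"] by simp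
    ultimately show "\<exists>z. (m k has_real_derivative z) (at x) \<and> z \<ge> 0" by blast
  next
    show "continuous_on {r1..R k} (m k)" by (rule continuous_on_subset[OF sol_mcont[OF s, of "R k"]]) (use r1 in auto)
  qed
  ultimately show ?thesis using sol_m0 mass[OF k] by simp
qed

definition "Y0 = \<kappa>0 + 1"
definition "Lg = (SOME L. L > 0 \<and> (\<forall>a b. a \<le> Y0 \<longrightarrow> b \<le> Y0 \<longrightarrow> \<bar>g a - g b\<bar> \<le> L * \<bar>a - b\<bar>))"

lemma Lg: "Lg > 0" "\<And>a b. a \<le> Y0 \<Longrightarrow> b \<le> Y0 \<Longrightarrow> \<bar>g a - g b\<bar> \<le> Lg * \<bar>a - b\<bar>"
proof -
  have "Lg > 0 \<and> (\<forall>a b. a \<le> Y0 \<longrightarrow> b \<le> Y0 \<longrightarrow> \<bar>g a - g b\<bar> \<le> Lg * \<bar>a - b\<bar>)"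
    unfolding Lg_def by (rule someI_ex[OF g_lip])
  then show "Lg > 0" "\<And>a b. a \<le> Y0 \<Longrightarrow> b \<le> Y0 \<Longrightarrow> \<bar>g a - g b\<bar> \<le> Lg * \<bar>a - b\<bar>" by auto
qed

definition "G = Lg * Y0"

lemma Y0: "Y0 > 0" unfolding Y0_def using k0 by simp
lemma G: "G > 0" unfolding G_def using Lg Y0 by simp

lemma g_le_G: assumes "a \<le> Y0" shows "g a \<le> G"
proof (cases "a > 0")
  case True
  have "\<bar>g a - g 0\<bar> \<le> Lg * \<bar>a - 0\<bar>" using Lg(2)[of a 0] assms Y0 by simp
  then have "g a \<le> Lg * a" using g_nonpos[of 0] True by simp
  also have "\<dots> \<le> Lg * Y0" using assms Lg by simp
  finally show ?thesis unfolding G_def .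
next
  case False then show ?thesis using g_nonpos G by simp
qed

lemma Pg_lip: "a \<le> Y0 \<Longrightarrow> b \<le> Y0 \<Longrightarrow> \<bar>P (g a) - P (g b)\<bar> \<le> Lg * \<bar>a - b\<bar>"
  using P_lip[OF g_nonneg g_nonneg, of a b] Lg(2)[of a b] by linarith

definition "good k \<longleftrightarrow> 0 < k \<and> k \<le> Y0"

lemma good_sol: "good k \<Longrightarrow> tov_sol P P' k (y k)" unfolding good_def using sol by simp
lemma good_k0: "good \<kappa>0" unfolding good_def Y0_def using k0 by simp

lemma good_yle: "good k \<Longrightarrow> r \<ge> 0 \<Longrightarrow> y k r \<le> Y0"
  using sol_le[OF good_sol] unfolding good_def by force

lemma good_g: "good k \<Longrightarrow> r \<ge> 0 \<Longrightarrow> 0 \<le> g (y k r) \<and> g (y k r) \<le> G"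
  using g_nonneg g_le_G good_yle by blast

lemma good_p: "good k \<Longrightarrow> r \<ge> 0 \<Longrightarrow> 0 \<le> P (g (y k r)) \<and> P (g (y k r)) \<le> G"
  using P_nonneg[OF g_nonneg] P_le[OF g_nonneg] good_g by (meson order_trans)

lemma good_m: assumes k: "good k" and r: "r \<ge> 0" shows "0 \<le> m k r \<and> m k r \<le> 4*pi*G*r^3"
proof -
  have s: "tov_sol P P' k (y k)" by (rule good_sol[OF k])
  have "\<bar>m k r - m k 0\<bar> \<le> (4*pi*(r\<^sup>2*G)) * \<bar>r - 0\<bar>"
  proof (rule deriv_bound_real[OF r])
    fix x assume x: "x \<in> {0..r}"
    show "(m k has_real_derivative 4 * pi * (x\<^sup>2 * g (y k x))) (at x within {0..r})" by (rule sol_dm[OF s x])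
    have "x\<^sup>2 * g (y k x) \<le> r\<^sup>2 * G" using good_g[OF k, of x] x by (intro mult_mono power_mono) auto
    moreover have "0 \<le> g (y k x)" using good_g[OF k, of x] x by simp
    ultimately show "\<bar>4 * pi * (x\<^sup>2 * g (y k x))\<bar> \<le> 4*pi*(r\<^sup>2*G)" by simp
  qed (use r in auto)
  moreover have "4*pi*(r\<^sup>2*G) * \<bar>r - 0\<bar> = 4*pi*G*r^3" using r by (simp add: power2_eq_square power3_eq_cube)
  ultimately have "\<bar>m k r - m k 0\<bar> \<le> 4*pi*G*r^3" by linarith
  then show ?thesis using sol_m0 sol_m_nonneg[OF s r] by simp
qed

definition "T0 = R \<kappa>0 + 1"
lemma T0: "T0 > 1" "R \<kappa>0 < T0" "R \<kappa>0 > 0" unfolding T0_def using radius[OF k0] by auto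

lemma beta0_ex: "\<exists>b. 0 < b \<and> b \<le> 1/2 \<and> (\<forall>r. 0 < r \<and> r \<le> T0 \<longrightarrow> b * r \<le> r - 2 * m \<kappa>0 r)"
proof -
  have s: "tov_sol P P' \<kappa>0 (y \<kappa>0)" by (rule sol[OF k0])
  define r1 where "r1 = min 1 (1 / (16*pi*G + 1))"
  have den: "16*pi*G + 1 > 0" using G by (simp add: add_pos_pos)
  have r1: "0 < r1" "r1 \<le> 1" "r1 * (16*pi*G + 1) \<le> 1"
  proof -
    show "0 < r1" unfolding r1_def using den by simp
    show "r1 \<le> 1" unfolding r1_def by simp
    have "r1 \<le> 1 / (16*pi*G + 1)" unfolding r1_def by simp
    then have "r1 * (16*pi*G + 1) \<le> 1 / (16*pi*G + 1) * (16*pi*G + 1)" using den by (intro mult_right_mono) auto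
    then show "r1 * (16*pi*G + 1) \<le> 1" using den by simp
  qed
  have small: "(1/2) * r \<le> r - 2 * m \<kappa>0 r" if r: "0 < r" "r \<le> r1" for r
  proof -
    have "m \<kappa>0 r \<le> 4*pi*G*r^3" using good_m[OF good_k0, of r] r by simp
    moreover have "8*pi*G*r^2 \<le> 1/2"
    proof -
      have "r^2 \<le> r" using r r1 by (simp add: power2_eq_square mult_le_cancel_right1)
      then have "8*pi*G*r^2 \<le> 8*pi*G*r" using G by simp
      also have "\<dots> \<le> 8*pi*G*r1" using r G by simp
      also have "\<dots> \<le> 1/2" using r1 G by (simp add: field_simps)
      finally show ?thesis .
    qed
    moreover have "2*(4*pi*G*r^3) = (8*pi*G*r^2) * r" by (simp add: power2_eq_square power3_eq_cube)
    ultimately have "2 * m \<kappa>0 r \<le> (1/2) * r" using r by (smt (verit) mult_right_mono)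
    then show ?thesis by simp
  qed
  show ?thesis
  proof (cases "T0 \<le> r1")
    case True then show ?thesis using small by (intro exI[of _ "1/2"]) auto
  next
    case False
    define \<psi> where "\<psi> r = (r - 2 * m \<kappa>0 r) / r" for r
    have c: "continuous_on {r1..T0} \<psi>" unfolding \<psi>_def
      using r1 by (intro continuous_intros continuous_on_subset[OF sol_mcont[OF s, of T0]]) auto
    obtain x where x: "x \<in> {r1..T0}" "\<And>z. z \<in> {r1..T0} \<Longrightarrow> \<psi> x \<le> \<psi> z"
      using continuous_attains_inf[OF compact_Icc _ c] False by auto
    have xp: "x > 0" using x r1 by simp
    have "\<psi> x > 0" unfolding \<psi>_def using sol_m2[OF s xp] xp by simp
    show ?thesis
    proof (intro exI[of _ "min (1/2) (\<psi> x)"] conjI allI impI)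
      fix r assume r: "0 < r \<and> r \<le> T0"
      show "min (1/2) (\<psi> x) * r \<le> r - 2 * m \<kappa>0 r"
      proof (cases "r \<le> r1")
        case True
        then show ?thesis using small[of r] r by (smt (verit) mult_right_mono min.cobounded1)
      next
        case False
        then have "\<psi> x \<le> \<psi> r" using x(2)[of r] r by auto
        then have "\<psi> x * r \<le> r - 2 * m \<kappa>0 r" unfolding \<psi>_def using r by (simp add: field_simps)
        then show ?thesis using r by (smt (verit) mult_right_mono min.cobounded2)
      qed
    qed (use \<open>\<psi> x > 0\<close> in auto)
  qed
qed

definition "\<beta>0 = (SOME b. 0 < b \<and> b \<le> 1/2 \<and> (\<forall>r. 0 < r \<and> r \<le> T0 \<longrightarrow> b * r \<le> r - 2 * m \<kappa>0 r))"
lemma beta0: "0 < \<beta>0" "\<beta>0 \<le> 1/2" "\<And>r. 0 < r \<Longrightarrow> r \<le> T0 \<Longrightarrow> \<beta>0 * r \<le> r - 2 * m \<kappa>0 r"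
  using someI_ex[OF beta0_ex] unfolding \<beta>0_def[symmetric] by auto

end

context mainl begin

definition "\<beta> = \<beta>0 / 2"
definition "Cm = 4*pi*G"
definition "K1 = (1 + 8*pi*T0\<^sup>2*G)/\<beta>\<^sup>2"
definition "K2 = (4*pi*T0 + 8*pi*Cm*T0^3)/\<beta>\<^sup>2"
definition "cond k t \<longleftrightarrow> (\<forall>r. 0 < r \<and> r \<le> t \<longrightarrow> \<beta>*r \<le> r - 2 * m k r)"
definition "dy k r = y k r - y \<kappa>0 r"
definition "dm k r = m k r - m \<kappa>0 r"

lemma beta: "\<beta> > 0" "\<beta> \<le> \<beta>0" unfolding \<beta>_def using beta0 by auto
lemma K: "K1 \<ge> 0" "K2 \<ge> 0" "Cm > 0"
  unfolding K1_def K2_def Cm_def using G T0 by (auto intro!: divide_nonneg_nonneg add_nonneg_nonneg)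

lemma cond_mono: "cond k t \<Longrightarrow> t' \<le> t \<Longrightarrow> cond k t'" unfolding cond_def by auto

lemma dFF:
  assumes k: "good k" and c: "cond k t" and x: "0 < x" "x \<le> t" and t: "t \<le> T0"
  shows "\<bar>FF (m k x) (P (g (y k x))) x - FF (m \<kappa>0 x) (P (g (y \<kappa>0 x))) x\<bar>
         \<le> K1 * (\<bar>dm k x\<bar>/x\<^sup>2) + K2 * Lg * \<bar>dy k x\<bar>"
proof -
  have xT: "x \<le> T0" using x t by simp
  have "\<bar>FF (m k x) (P (g (y k x))) x - FF (m \<kappa>0 x) (P (g (y \<kappa>0 x))) x\<bar>
     \<le> (1 + 8*pi*T0\<^sup>2*G)/\<beta>\<^sup>2 * (\<bar>m k x - m \<kappa>0 x\<bar>/x\<^sup>2) + (4*pi*T0 + 8*pi*Cm*T0^3)/\<beta>\<^sup>2 * \<bar>P (g (y k x)) - P (g (y \<kappa>0 x))\<bar>"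
  proof (rule FF_lip[OF x(1) xT])
    show "0 \<le> m k x" "m k x \<le> Cm * x^3" using good_m[OF k, of x] x unfolding Cm_def by auto
    show "0 \<le> m \<kappa>0 x" using good_m[OF good_k0, of x] x by auto
    show "0 \<le> P (g (y k x))" "P (g (y k x)) \<le> G" using good_p[OF k, of x] x by auto
    show "0 \<le> P (g (y \<kappa>0 x))" using good_p[OF good_k0, of x] x by auto
    show "\<beta> * x \<le> x - 2 * m k x" using c x unfolding cond_def by auto
    have "\<beta> * x \<le> \<beta>0 * x" using beta x by simp
    then show "\<beta> * x \<le> x - 2 * m \<kappa>0 x" using beta0(3)[OF x(1) xT] by linarith
    show "\<beta> > 0" by (rule beta(1))
  qed
  also have "\<dots> \<le> K1 * (\<bar>dm k x\<bar>/x\<^sup>2) + K2 * (Lg * \<bar>dy k x\<bar>)"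
    unfolding K1_def[symmetric] K2_def[symmetric] dm_def dy_def
    using Pg_lip[OF good_yle[OF k] good_yle[OF good_k0], of x x] x K by (intro add_mono mult_left_mono) auto
  finally show ?thesis by (simp add: mult.assoc)
qed

lemma dy_deriv: assumes k: "good k" and ab: "0 \<le> a" and x: "x \<in> {a..b}"
  shows "(dy k has_real_derivative FF (m k x) (P (g (y k x))) x - FF (m \<kappa>0 x) (P (g (y \<kappa>0 x))) x) (at x within {a..b})"
  unfolding dy_def[abs_def]
  by (intro DERIV_diff sol_dy_Icc[OF good_sol[OF k] ab x] sol_dy_Icc[OF good_sol[OF good_k0] ab x])

lemma dm_deriv: assumes k: "good k" and ab: "0 \<le> a" and x: "x \<in> {a..b}"
  shows "(dm k has_real_derivative 4 * pi * (x\<^sup>2 * g (y k x)) - 4 * pi * (x\<^sup>2 * g (y \<kappa>0 x))) (at x within {a..b})"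
  unfolding dm_def[abs_def]
  by (intro DERIV_diff sol_dm_Icc[OF good_sol[OF k] x ab] sol_dm_Icc[OF good_sol[OF good_k0] x ab])

lemma dy_cont: "good k \<Longrightarrow> continuous_on {0..b} (dy k)"
  unfolding dy_def[abs_def] using sol_ycont'[OF good_sol] good_k0 by (intro continuous_intros) auto

lemma dm_cont: "good k \<Longrightarrow> continuous_on {0..b} (dm k)"
  unfolding dm_def[abs_def] using sol_mcont[OF good_sol] good_k0 by (intro continuous_intros) auto

lemma dy0: "good k \<Longrightarrow> dy k 0 = k - \<kappa>0"
  unfolding dy_def using sol_y0[OF good_sol] good_k0 by simp

lemma dm0: "dm k 0 = 0" unfolding dm_def using sol_m0 by simp

lemma dm_incr:
  assumes k: "good k" and ab: "0 \<le> a" "a \<le> b" and W: "\<And>u. u \<in> {a..b} \<Longrightarrow> \<bar>dy k u\<bar> \<le> W"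
  shows "\<bar>dm k b - dm k a\<bar> \<le> 4*pi*b\<^sup>2*Lg*W * (b - a)"
proof -
  have "\<bar>dm k b - dm k a\<bar> \<le> (4*pi*b\<^sup>2*Lg*W) * \<bar>b - a\<bar>"
  proof (rule deriv_bound_real[OF ab(2)])
    fix x assume x: "x \<in> {a..b}"
    show "(dm k has_real_derivative 4 * pi * (x\<^sup>2 * g (y k x)) - 4 * pi * (x\<^sup>2 * g (y \<kappa>0 x))) (at x within {a..b})"
      by (rule dm_deriv[OF k ab(1) x])
    have xx: "0 \<le> x" "x \<le> b" using x ab by auto
    have "\<bar>4 * pi * (x\<^sup>2 * g (y k x)) - 4 * pi * (x\<^sup>2 * g (y \<kappa>0 x))\<bar> = 4*pi*x\<^sup>2 * \<bar>g (y k x) - g (y \<kappa>0 x)\<bar>"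
      by (simp add: abs_mult right_diff_distrib[symmetric] mult.assoc)
    also have "\<dots> \<le> 4*pi*b\<^sup>2 * (Lg * W)"
    proof (rule mult_mono)
      show "4*pi*x\<^sup>2 \<le> 4*pi*b\<^sup>2" using xx by (simp add: power_mono)
      have "\<bar>g (y k x) - g (y \<kappa>0 x)\<bar> \<le> Lg * \<bar>y k x - y \<kappa>0 x\<bar>"
        using Lg(2)[OF good_yle[OF k xx(1)] good_yle[OF good_k0 xx(1)]] .
      also have "\<dots> \<le> Lg * W" using W[OF x] Lg unfolding dy_def by simp
      finally show "\<bar>g (y k x) - g (y \<kappa>0 x)\<bar> \<le> Lg * W" .
    qed auto
    finally show "\<bar>4 * pi * (x\<^sup>2 * g (y k x)) - 4 * pi * (x\<^sup>2 * g (y \<kappa>0 x))\<bar> \<le> 4*pi*b\<^sup>2*Lg*W"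
      by (simp add: mult.assoc)
  qed (use ab in auto)
  then show ?thesis using ab by simp
qed

lemma dm_small:
  assumes k: "good k" and x: "0 \<le> x" and W: "\<And>u. u \<in> {0..x} \<Longrightarrow> \<bar>dy k u\<bar> \<le> W"
  shows "\<bar>dm k x\<bar> \<le> 4*pi*Lg*W * x^3"
  using dm_incr[OF k order_refl x W] dm0 by (simp add: power2_eq_square power3_eq_cube mult_ac)

lemma dy_incr:
  assumes k: "good k" and c: "cond k b" and ab: "0 \<le> a" "a \<le> b" "b \<le> T0"
    and B: "\<And>x. x \<in> {a..b} \<Longrightarrow> 0 < x \<Longrightarrow> K1 * (\<bar>dm k x\<bar>/x\<^sup>2) + K2 * Lg * \<bar>dy k x\<bar> \<le> B"
    and B0: "B \<ge> 0" and u: "u \<in> {a..b}" "v \<in> {a..b}"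
  shows "\<bar>dy k u - dy k v\<bar> \<le> B * \<bar>u - v\<bar>"
proof (rule deriv_bound_real[OF ab(2) dy_deriv[OF k ab(1)] _ u])
  fix x assume x: "x \<in> {a..b}"
  show "\<bar>FF (m k x) (P (g (y k x))) x - FF (m \<kappa>0 x) (P (g (y \<kappa>0 x))) x\<bar> \<le> B"
  proof (cases "x = 0")
    case True then show ?thesis using B0 by (simp add: FF_0)
  next
    case False
    then have xp: "0 < x" using x ab by simp
    show ?thesis using dFF[OF k c xp _ ab(3)] B[OF x xp] x by auto
  qed
qed

definition "Kf = K1*4*pi*Lg*T0 + K2*Lg"
definition "\<delta>f = 1/(2*Kf+1)"
definition "Nf = nat \<lceil>T0/\<delta>f\<rceil>"

lemma Kf: "Kf \<ge> 0" "\<delta>f > 0" "Kf * \<delta>f \<le> 1/2" "T0 \<le> real Nf * \<delta>f"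
proof -
  show kf: "Kf \<ge> 0" unfolding Kf_def using K Lg T0 by simp
  show df: "\<delta>f > 0" unfolding \<delta>f_def using kf by simp
  show "Kf * \<delta>f \<le> 1/2" unfolding \<delta>f_def using kf by (simp add: field_simps)
  have "T0/\<delta>f \<le> real Nf" unfolding Nf_def by linarith
  then show "T0 \<le> real Nf * \<delta>f" using df by (simp add: field_simps)
qed

lemma FE:
  assumes k: "good k" and t: "0 \<le> t" "t \<le> T0" and c: "cond k t" and r: "r \<in> {0..t}"
  shows "\<bar>dy k r\<bar> \<le> 2^Nf * \<bar>k - \<kappa>0\<bar>"
proof -
  have "\<bar>dy k r\<bar> \<le> 2^Nf * \<bar>dy k 0\<bar>"
  proof (rule gronwall_fwd[where D="\<lambda>r. \<bar>dy k r\<bar>" and \<delta>=\<delta>f and a=0 and b=t and n=Nf])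
    show "continuous_on {0..t} (\<lambda>r. \<bar>dy k r\<bar>)" using dy_cont[OF k] by (intro continuous_intros)
    show "t - 0 \<le> real Nf * \<delta>f" using Kf t by simp
  next
    fix s t' W x
    assume h: "0 \<le> s" "s \<le> t'" "t' \<le> t" "t' - s \<le> \<delta>f" "\<forall>r\<in>{0..t'}. \<bar>dy k r\<bar> \<le> W" "x \<in> {s..t'}"
    have W0: "W \<ge> 0" using h(5) h(1,2) by (meson abs_ge_zero atLeastAtMost_iff order_refl order_trans)
    have "\<bar>dy k x - dy k s\<bar> \<le> (Kf * W) * \<bar>x - s\<bar>"
    proof (rule dy_incr[OF k cond_mono[OF c] h(1)])
      show "x \<le> t" using h by simp
      show "s \<le> x" using h by simp
      show "x \<le> T0" using h t by simp
      show "Kf * W \<ge> 0" using Kf W0 by simp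
      show "x \<in> {s..x}" "s \<in> {s..x}" using h by auto
    next
      fix z assume z: "z \<in> {s..x}" "0 < z"
      have zz: "z \<le> t'" using z h by simp
      have dmz: "\<bar>dm k z\<bar> \<le> 4*pi*Lg*W * z^3"
        by (rule dm_small[OF k]) (use z h zz in auto)
      have "K1 * (\<bar>dm k z\<bar>/z\<^sup>2) \<le> K1 * (4*pi*Lg*W*z)"
      proof (rule mult_left_mono[OF _ K(1)])
        have "\<bar>dm k z\<bar>/z\<^sup>2 \<le> (4*pi*Lg*W * z^3)/z\<^sup>2" using dmz z by (simp add: divide_right_mono)
        also have "\<dots> = 4*pi*Lg*W*z" using z by (simp add: power2_eq_square power3_eq_cube)
        finally show "\<bar>dm k z\<bar>/z\<^sup>2 \<le> 4*pi*Lg*W*z" .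
      qed
      also have "\<dots> \<le> K1 * (4*pi*Lg*W*T0)"
        using z zz h t K Lg W0 by (intro mult_left_mono) auto
      finally have a1: "K1 * (\<bar>dm k z\<bar>/z\<^sup>2) \<le> K1 * (4*pi*Lg*W*T0)" .
      have a2: "K2 * Lg * \<bar>dy k z\<bar> \<le> K2 * Lg * W"
        using h(5) z zz h K Lg by (intro mult_left_mono) auto
      show "K1 * (\<bar>dm k z\<bar>/z\<^sup>2) + K2 * Lg * \<bar>dy k z\<bar> \<le> Kf * W"
        using a1 a2 unfolding Kf_def by (simp add: algebra_simps)
    qed
    also have "\<dots> \<le> (Kf * W) * \<delta>f" using h Kf W0 by (intro mult_left_mono) auto
    also have "\<dots> = (Kf * \<delta>f) * W" by simp
    also have "\<dots> \<le> (1/2) * W" using Kf W0 by (intro mult_right_mono) auto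
    finally have "\<bar>dy k x - dy k s\<bar> \<le> (1/2) * W" .
    then show "\<bar>dy k x\<bar> \<le> \<bar>dy k s\<bar> + W/2" using abs_triangle_ineq2[of "dy k x" "dy k s"] by linarith
  qed (use Kf t r in auto)
  then show ?thesis using dy0[OF k] by simp
qed

end

context mainl begin

lemma fwd_B:
  assumes k: "good k" and c: "cond k b" and b: "b \<le> T0" and W0: "W \<ge> 0"
    and W: "\<And>u. u \<in> {0..b} \<Longrightarrow> \<bar>dy k u\<bar> \<le> W" and z: "0 < z" "z \<le> b"
  shows "K1 * (\<bar>dm k z\<bar>/z\<^sup>2) + K2 * Lg * \<bar>dy k z\<bar> \<le> Kf * W"
proof -
  have dmz: "\<bar>dm k z\<bar> \<le> 4*pi*Lg*W * z^3"
    by (rule dm_small[OF k]) (use z W in auto)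
  have "K1 * (\<bar>dm k z\<bar>/z\<^sup>2) \<le> K1 * (4*pi*Lg*W*z)"
  proof (rule mult_left_mono[OF _ K(1)])
    have "\<bar>dm k z\<bar>/z\<^sup>2 \<le> (4*pi*Lg*W * z^3)/z\<^sup>2" using dmz z by (simp add: divide_right_mono)
    also have "\<dots> = 4*pi*Lg*W*z" using z by (simp add: power2_eq_square power3_eq_cube)
    finally show "\<bar>dm k z\<bar>/z\<^sup>2 \<le> 4*pi*Lg*W*z" .
  qed
  also have "\<dots> \<le> K1 * (4*pi*Lg*W*T0)"
    using z b K Lg W0 by (intro mult_left_mono) auto
  finally have a1: "K1 * (\<bar>dm k z\<bar>/z\<^sup>2) \<le> K1 * (4*pi*Lg*W*T0)" .
  have a2: "K2 * Lg * \<bar>dy k z\<bar> \<le> K2 * Lg * W"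
    using W[of z] z K Lg by (intro mult_left_mono) auto
  show ?thesis using a1 a2 unfolding Kf_def by (simp add: algebra_simps)
qed

definition "E = \<beta>/(8*pi*Lg*T0\<^sup>2)"
definition "\<eta> = E/(2*2^Nf)"

lemma E: "E > 0" "4*pi*Lg*E*T0\<^sup>2 = \<beta>/2" "\<eta> > 0" "2^Nf * \<eta> = E/2"
  unfolding E_def \<eta>_def using beta Lg T0 by (auto simp: field_simps)

lemma cond_small:
  assumes k: "good k" and t: "0 \<le> t" "t \<le> T0" and W: "\<And>u. u \<in> {0..t} \<Longrightarrow> \<bar>dy k u\<bar> \<le> E"
  shows "cond k t"
  unfolding cond_def
proof (intro allI impI)
  fix r assume r: "0 < r \<and> r \<le> t"
  have "\<bar>dm k r\<bar> \<le> 4*pi*Lg*E * r^3" by (rule dm_small[OF k]) (use r W in auto)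
  also have "\<dots> = (4*pi*Lg*E) * (r\<^sup>2 * r)" by (simp add: power2_eq_square power3_eq_cube)
  also have "\<dots> \<le> (4*pi*Lg*E) * (T0\<^sup>2 * r)"
    using r t E Lg by (intro mult_left_mono mult_right_mono power_mono) auto
  also have "\<dots> = \<beta>/2 * r" using E(2) by (simp add: algebra_simps)
  finally have "\<bar>dm k r\<bar> \<le> \<beta>/2 * r" .
  moreover have "\<beta>0 * r \<le> r - 2 * m \<kappa>0 r" using beta0(3)[of r] r t by simp
  moreover have "\<beta>0 * r = 2 * (\<beta> * r)" unfolding \<beta>_def by simp
  moreover have "\<beta>/2 * r = (\<beta> * r)/2" by simp
  ultimately show "\<beta>*r \<le> r - 2 * m k r" unfolding dm_def abs_le_iff by linarith
qed

lemma BS: assumes k: "good k" and h: "\<bar>k - \<kappa>0\<bar> \<le> \<eta>" shows "cond k T0"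
proof -
  have claim: "\<forall>r\<in>{0..T0}. \<bar>dy k r\<bar> < E"
  proof (rule ccontr)
    assume "\<not> (\<forall>r\<in>{0..T0}. \<bar>dy k r\<bar> < E)"
    then obtain r0 where r0: "r0 \<in> {0..T0}" "E \<le> \<bar>dy k r0\<bar>" by (auto simp: not_less)
    define Z where "Z = {r \<in> {0..T0}. (\<lambda>_. E) r \<le> \<bar>dy k r\<bar>}"
    have Zc: "closed Z" unfolding Z_def
      by (rule continuous_on_closed_Collect_le) (use dy_cont[OF k] in \<open>auto intro: continuous_intros\<close>)
    have Zne: "Z \<noteq> {}" using r0 unfolding Z_def by auto
    have Zb: "bdd_below Z" unfolding Z_def by (rule bdd_belowI[of _ 0]) auto
    define rs where "rs = Inf Z"
    have rsZ: "rs \<in> Z" unfolding rs_def by (rule closed_contains_Inf[OF Zne Zb Zc])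
    have below: "\<bar>dy k r\<bar> < E" if "0 \<le> r" "r < rs" for r
    proof (rule ccontr)
      assume "\<not> \<bar>dy k r\<bar> < E"
      then have "r \<in> Z" using that rsZ unfolding Z_def by auto
      then have "rs \<le> r" unfolding rs_def by (rule cInf_lower[OF _ Zb])
      then show False using that by simp
    qed
    have "\<eta> \<le> 2^Nf * \<eta>" using E(3) by simp
    then have E0: "\<bar>dy k 0\<bar> < E" using dy0[OF k] h E by simp
    have rs0: "rs > 0"
    proof -
      have "rs \<ge> 0" "rs \<le> T0" using rsZ unfolding Z_def by auto
      moreover have "rs \<noteq> 0" using rsZ E0 unfolding Z_def by auto
      ultimately show ?thesis by simp
    qed
    have rsT: "rs \<le> T0" using rsZ unfolding Z_def by auto
    have half: "\<bar>dy k r'\<bar> \<le> E/2" if r': "0 \<le> r'" "r' < rs" for r'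
    proof -
      have cr: "cond k r'"
        by (rule cond_small[OF k r'(1)]) (use r' rsT below in \<open>auto intro: less_imp_le\<close>)
      have "\<bar>dy k r'\<bar> \<le> 2^Nf * \<bar>k - \<kappa>0\<bar>" by (rule FE[OF k r'(1) _ cr]) (use r' rsT in auto)
      also have "\<dots> \<le> 2^Nf * \<eta>" using h by simp
      finally show ?thesis using E(4) by simp
    qed
    define C where "C = {r \<in> {0..rs}. \<bar>dy k r\<bar> \<le> (\<lambda>_. E/2) r}"
    have Cc: "closed C" unfolding C_def
      by (rule continuous_on_closed_Collect_le) (use dy_cont[OF k] in \<open>auto intro: continuous_intros\<close>)
    have "{0..<rs} \<subseteq> C" unfolding C_def using half by auto
    then have "closure {0..<rs} \<subseteq> C" by (rule closure_minimal[OF _ Cc])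
    then have "rs \<in> C" using rs0 by auto
    then have "\<bar>dy k rs\<bar> \<le> E/2" unfolding C_def by simp
    moreover have "E \<le> \<bar>dy k rs\<bar>" using rsZ unfolding Z_def by simp
    ultimately show False using E by simp
  qed
  show ?thesis by (rule cond_small[OF k _ order_refl]) (use claim T0 in \<open>auto intro: less_imp_le\<close>)
qed

end

context mainl begin

definition "Kb \<epsilon> = K1/\<epsilon>\<^sup>2 + K2*Lg + 4*pi*T0\<^sup>2*Lg"
definition "\<delta>b \<epsilon> = 1/(2*Kb \<epsilon> + 1)"
definition "Nb \<epsilon> = nat \<lceil>R \<kappa>0/\<delta>b \<epsilon>\<rceil>"

lemma Kb: "Kb \<epsilon> \<ge> 0" "\<delta>b \<epsilon> > 0" "Kb \<epsilon> * \<delta>b \<epsilon> \<le> 1/2" "R \<kappa>0 \<le> real (Nb \<epsilon>) * \<delta>b \<epsilon>"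
proof -
  show kf: "Kb \<epsilon> \<ge> 0" unfolding Kb_def using K Lg by simp
  show df: "\<delta>b \<epsilon> > 0" unfolding \<delta>b_def using kf by simp
  show "Kb \<epsilon> * \<delta>b \<epsilon> \<le> 1/2" unfolding \<delta>b_def using kf by (simp add: field_simps)
  have "R \<kappa>0/\<delta>b \<epsilon> \<le> real (Nb \<epsilon>)" unfolding Nb_def by linarith
  then show "R \<kappa>0 \<le> real (Nb \<epsilon>) * \<delta>b \<epsilon>" using df by (simp add: field_simps)
qed

lemma BE:
  assumes k: "good k" and c: "cond k T0" and e: "0 < \<epsilon>" "\<epsilon> \<le> R \<kappa>0" and r: "r \<in> {\<epsilon>..R \<kappa>0}"
  shows "\<bar>dy k r\<bar> + \<bar>dm k r\<bar> \<le> 2^(Nb \<epsilon>) * (\<bar>dy k (R \<kappa>0)\<bar> + \<bar>dm k (R \<kappa>0)\<bar>)"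
proof (rule gronwall_bwd[where D="\<lambda>r. \<bar>dy k r\<bar> + \<bar>dm k r\<bar>" and \<delta>="\<delta>b \<epsilon>" and a=\<epsilon> and b="R \<kappa>0" and n="Nb \<epsilon>"])
  show "continuous_on {\<epsilon>..R \<kappa>0} (\<lambda>r. \<bar>dy k r\<bar> + \<bar>dm k r\<bar>)"
    by (intro continuous_intros continuous_on_subset[OF dy_cont[OF k]] continuous_on_subset[OF dm_cont[OF k]])
       (use e in auto)
  show "R \<kappa>0 - \<epsilon> \<le> real (Nb \<epsilon>) * \<delta>b \<epsilon>" using Kb(4)[of \<epsilon>] e by simp
next
  fix s t W x
  assume h: "\<epsilon> \<le> s" "s \<le> t" "t \<le> R \<kappa>0" "t - s \<le> \<delta>b \<epsilon>"
    "\<forall>r\<in>{s..R \<kappa>0}. \<bar>dy k r\<bar> + \<bar>dm k r\<bar> \<le> W" "x \<in> {s..t}"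
  have Wy: "\<bar>dy k u\<bar> \<le> W" "\<bar>dm k u\<bar> \<le> W" if "u \<in> {s..R \<kappa>0}" for u
    using h(5) that by (smt (verit) abs_ge_zero)+
  have W0: "W \<ge> 0" using Wy(1)[of s] h by (smt (verit) abs_ge_zero atLeastAtMost_iff)
  have tT: "t \<le> T0" using h T0 by simp
  have xs: "0 \<le> x" "x \<le> t" "\<epsilon> \<le> x" using h e by auto
  have a1: "\<bar>dy k t - dy k x\<bar> \<le> ((K1/\<epsilon>\<^sup>2 + K2*Lg) * W) * \<bar>t - x\<bar>"
  proof (rule dy_incr[OF k cond_mono[OF c tT] xs(1,2) tT])
    fix z assume z: "z \<in> {x..t}" "0 < z"
    have zs: "z \<in> {s..R \<kappa>0}" using z h by auto
    have "K1 * (\<bar>dm k z\<bar>/z\<^sup>2) \<le> K1 * (W/\<epsilon>\<^sup>2)"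
    proof (rule mult_left_mono[OF _ K(1)])
      have "\<bar>dm k z\<bar>/z\<^sup>2 \<le> W/z\<^sup>2" using Wy(2)[OF zs] z by (simp add: divide_right_mono)
      also have "\<dots> \<le> W/\<epsilon>\<^sup>2" using W0 z xs e by (intro divide_left_mono power_mono) auto
      finally show "\<bar>dm k z\<bar>/z\<^sup>2 \<le> W/\<epsilon>\<^sup>2" .
    qed
    moreover have "K2 * Lg * \<bar>dy k z\<bar> \<le> K2 * Lg * W" using Wy(1)[OF zs] K Lg by (intro mult_left_mono) auto
    ultimately show "K1 * (\<bar>dm k z\<bar>/z\<^sup>2) + K2 * Lg * \<bar>dy k z\<bar> \<le> (K1/\<epsilon>\<^sup>2 + K2*Lg) * W"
      by (simp add: algebra_simps)
  next
    show "(K1/\<epsilon>\<^sup>2 + K2*Lg) * W \<ge> 0" using K Lg W0 by simp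
  qed (use xs in auto)
  have a2: "\<bar>dm k t - dm k x\<bar> \<le> 4*pi*t\<^sup>2*Lg*W * (t - x)"
    by (rule dm_incr[OF k xs(1,2)]) (use Wy(1) h in auto)
  also have "\<dots> \<le> 4*pi*T0\<^sup>2*Lg*W * (t - x)"
    using tT xs Lg W0 h by (intro mult_right_mono mult_left_mono power_mono) auto
  finally have a2': "\<bar>dm k t - dm k x\<bar> \<le> (4*pi*T0\<^sup>2*Lg*W) * (t - x)" .
  have tx: "\<bar>t - x\<bar> = t - x" "t - x \<le> \<delta>b \<epsilon>" using xs h by auto
  have "\<bar>dy k t - dy k x\<bar> + \<bar>dm k t - dm k x\<bar> \<le> (Kb \<epsilon> * W) * (t - x)"
    using a1 a2' unfolding tx Kb_def by (simp add: algebra_simps)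
  also have "\<dots> \<le> (Kb \<epsilon> * W) * \<delta>b \<epsilon>" using tx Kb W0 by (intro mult_left_mono) auto
  also have "\<dots> = (Kb \<epsilon> * \<delta>b \<epsilon>) * W" by simp
  also have "\<dots> \<le> (1/2) * W" using Kb W0 by (intro mult_right_mono) auto
  finally have "\<bar>dy k t - dy k x\<bar> + \<bar>dm k t - dm k x\<bar> \<le> W/2" by simp
  then show "\<bar>dy k x\<bar> + \<bar>dm k x\<bar> \<le> \<bar>dy k t\<bar> + \<bar>dm k t\<bar> + W/2"
    using abs_triangle_ineq2[of "dy k x" "dy k t"] abs_triangle_ineq2[of "dm k x" "dm k t"]
      abs_minus_commute[of "dy k t" "dy k x"] abs_minus_commute[of "dm k t" "dm k x"] by linarith
qed (use e r Kb in auto)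

lemma stepD:
  assumes k: "good k" and c: "cond k T0" and e: "0 < \<epsilon>" "\<epsilon> \<le> T0" "Kf * \<epsilon> \<le> 1/4"
  shows "(2/3) * \<bar>k - \<kappa>0\<bar> \<le> \<bar>dy k \<epsilon>\<bar>"
proof -
  have cnt: "continuous_on {0..\<epsilon>} (\<lambda>z. \<bar>dy k z\<bar>)" using dy_cont[OF k] by (intro continuous_intros)
  obtain x where x: "x \<in> {0..\<epsilon>}" "\<And>z. z \<in> {0..\<epsilon>} \<Longrightarrow> \<bar>dy k z\<bar> \<le> \<bar>dy k x\<bar>"
    using continuous_attains_sup[OF compact_Icc _ cnt] e by auto
  define W where "W = \<bar>dy k x\<bar>"
  have W0: "W \<ge> 0" unfolding W_def by simp
  have cb: "cond k \<epsilon>" by (rule cond_mono[OF c e(2)])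
  have inc: "\<bar>dy k z - dy k 0\<bar> \<le> W/4" if z: "z \<in> {0..\<epsilon>}" for z
  proof -
    have "\<bar>dy k z - dy k 0\<bar> \<le> (Kf * W) * \<bar>z - 0\<bar>"
    proof (rule dy_incr[OF k cb order_refl _ e(2)])
      fix u assume u: "u \<in> {0..\<epsilon>}" "0 < u"
      show "K1 * (\<bar>dm k u\<bar>/u\<^sup>2) + K2 * Lg * \<bar>dy k u\<bar> \<le> Kf * W"
        by (rule fwd_B[OF k cb e(2) W0]) (use x u in \<open>auto simp: W_def\<close>)
    qed (use Kf W0 z e in auto)
    also have "\<dots> \<le> (Kf * W) * \<epsilon>" using z Kf W0 by (intro mult_left_mono) auto
    also have "\<dots> = (Kf * \<epsilon>) * W" by simp
    also have "\<dots> \<le> (1/4) * W" using e W0 by (intro mult_right_mono) auto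
    finally show ?thesis by simp
  qed
  have d0: "dy k 0 = k - \<kappa>0" by (rule dy0[OF k])
  have "W \<le> \<bar>k - \<kappa>0\<bar> + W/4" using inc[OF x(1)] d0 unfolding W_def by linarith
  then have "W \<le> (4/3) * \<bar>k - \<kappa>0\<bar>" by simp
  moreover have "\<bar>dy k \<epsilon> - dy k 0\<bar> \<le> W/4" using inc e by simp
  moreover have "\<bar>dy k 0\<bar> = \<bar>k - \<kappa>0\<bar>" using d0 by simp
  ultimately show ?thesis using abs_triangle_ineq2[of "dy k 0" "dy k \<epsilon>"] abs_minus_commute[of "dy k \<epsilon>" "dy k 0"] by linarith
qed

end

lemma deriv_small:
  fixes f :: "real \<Rightarrow> real"
  assumes "(f has_real_derivative 0) (at x)" "e > 0"
  shows "\<exists>d>0. \<forall>z. \<bar>z - x\<bar> < d \<longrightarrow> \<bar>f z - f x\<bar> \<le> e * \<bar>z - x\<bar>"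
proof -
  have "((\<lambda>z. (f z - f x) / (z - x)) \<longlongrightarrow> 0) (at x)"
    using assms(1) by (simp add: has_field_derivative_iff)
  then obtain d where d: "d > 0" "\<And>z. z \<noteq> x \<and> norm (z - x) < d \<Longrightarrow> norm ((f z - f x) / (z - x) - 0) < e"
    unfolding LIM_eq using assms(2) by blast
  have "\<bar>f z - f x\<bar> \<le> e * \<bar>z - x\<bar>" if z: "\<bar>z - x\<bar> < d" for z
  proof (cases "z = x")
    case True then show ?thesis by simp
  next
    case False
    then have "\<bar>(f z - f x) / (z - x)\<bar> < e" using d(2)[of z] z by simp
    then have "\<bar>f z - f x\<bar> / \<bar>z - x\<bar> < e" by (simp add: abs_div)
    then show ?thesis using False by (simp add: divide_less_eq less_imp_le)
  qed
  then show ?thesis using d(1) by blast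
qed

context mainl begin

definition "KF = (Cm + 4*pi*G) * T0 / \<beta>"

lemma KF: "KF \<ge> 0" unfolding KF_def using K G T0 beta by simp

lemma y_lip: assumes k: "good k" and c: "cond k T0" and ab: "a \<in> {0..T0}" "b \<in> {0..T0}"
  shows "\<bar>y k a - y k b\<bar> \<le> KF * \<bar>a - b\<bar>"
proof (rule deriv_bound_real[of 0 T0])
  show "0 \<le> T0" using T0 by simp
next
  fix x assume x: "x \<in> {0..T0}"
  show "(y k has_real_derivative FF (m k x) (P (g (y k x))) x) (at x within {0..T0})"
    by (rule sol_dy_Icc[OF good_sol[OF k] order_refl x])
  show "\<bar>FF (m k x) (P (g (y k x))) x\<bar> \<le> KF"
  proof (cases "x = 0")
    case True then show ?thesis using KF by (simp add: FF_0)
  next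
    case False
    then have xp: "0 < x" using x by simp
    show ?thesis unfolding KF_def
    proof (rule FF_bound[OF xp])
      show "x \<le> T0" using x by simp
      show "0 \<le> m k x" "m k x \<le> Cm * x^3" using good_m[OF k, of x] x unfolding Cm_def by auto
      show "0 \<le> P (g (y k x))" "P (g (y k x)) \<le> G" using good_p[OF k, of x] x by auto
      show "\<beta> * x \<le> x - 2 * m k x" using c x xp unfolding cond_def by auto
      show "\<beta> > 0" by (rule beta(1))
    qed
  qed
qed (use ab in auto)

lemma m_lip: assumes k: "good k" and ab: "a \<in> {0..T0}" "b \<in> {0..T0}"
  shows "\<bar>m k a - m k b\<bar> \<le> (4*pi*T0\<^sup>2*G) * \<bar>a - b\<bar>"
proof (rule deriv_bound_real[of 0 T0])
  show "0 \<le> T0" using T0 by simp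
next
  fix x assume x: "x \<in> {0..T0}"
  show "(m k has_real_derivative 4 * pi * (x\<^sup>2 * g (y k x))) (at x within {0..T0})"
    by (rule sol_dm[OF good_sol[OF k] x])
  have "x\<^sup>2 * g (y k x) \<le> T0\<^sup>2 * G" using good_g[OF k, of x] x by (intro mult_mono power_mono) auto
  moreover have "0 \<le> g (y k x)" using good_g[OF k, of x] x by simp
  ultimately show "\<bar>4 * pi * (x\<^sup>2 * g (y k x))\<bar> \<le> 4*pi*T0\<^sup>2*G" by simp
qed (use ab in auto)

lemma contra:
  assumes dM: "(M has_real_derivative 0) (at \<kappa>0)"
    and dMR: "((\<lambda>k. M k / R k) has_real_derivative 0) (at \<kappa>0)"
  shows False
proof -
  define R0 where "R0 = R \<kappa>0"
  have R0: "R0 > 0" "y \<kappa>0 R0 = 0" "R0 < T0" unfolding R0_def using radius[OF k0] T0 by auto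
  define Rt where "Rt k = M k / (M k / R k)" for k
  have Rt: "Rt k = R k" if "k > 0" for k
    using M_pos[OF that] radius[OF that] unfolding Rt_def by simp
  have MR0: "M \<kappa>0 / R \<kappa>0 \<noteq> 0" using M_pos[OF k0] radius[OF k0] by simp
  have dRt: "(Rt has_real_derivative 0) (at \<kappa>0)"
    using DERIV_divide[OF dM dMR MR0] unfolding Rt_def[abs_def] by simp
  define \<epsilon> where "\<epsilon> = min R0 (1/(4*Kf+1))"
  have eps: "0 < \<epsilon>" "\<epsilon> \<le> R0" "\<epsilon> \<le> T0" "Kf * \<epsilon> \<le> 1/4"
  proof -
    show "0 < \<epsilon>" unfolding \<epsilon>_def using R0 Kf by simp
    show "\<epsilon> \<le> R0" unfolding \<epsilon>_def by simp
    then show "\<epsilon> \<le> T0" using R0 by simp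
    have "Kf * \<epsilon> \<le> Kf * (1/(4*Kf+1))" unfolding \<epsilon>_def using Kf by (intro mult_left_mono) auto
    also have "\<dots> \<le> 1/4" using Kf by (simp add: field_simps)
    finally show "Kf * \<epsilon> \<le> 1/4" .
  qed
  define N where "N = Nb \<epsilon>"
  define A where "A = KF + 4*pi*T0\<^sup>2*G + 1"
  have A: "A \<ge> 1" unfolding A_def using KF G by simp
  define e where "e = 1/(3 * 2^N * A)"
  have e: "e > 0" "e \<le> 1/3" "2^N * A * e = 1/3"
  proof -
    show "e > 0" unfolding e_def using A by simp
    have "3 * 2^N * A \<ge> 3" using A by (smt (verit) mult_le_cancel_left1 one_le_power)
    then show "e \<le> 1/3" unfolding e_def by (simp add: field_simps)
    show "2^N * A * e = 1/3" unfolding e_def using A by simp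
  qed
  obtain d1 where d1: "d1 > 0" "\<And>z. \<bar>z - \<kappa>0\<bar> < d1 \<Longrightarrow> \<bar>M z - M \<kappa>0\<bar> \<le> e * \<bar>z - \<kappa>0\<bar>"
    using deriv_small[OF dM e(1)] by blast
  obtain d2 where d2: "d2 > 0" "\<And>z. \<bar>z - \<kappa>0\<bar> < d2 \<Longrightarrow> \<bar>Rt z - Rt \<kappa>0\<bar> \<le> e * \<bar>z - \<kappa>0\<bar>"
    using deriv_small[OF dRt e(1)] by blast
  define h where "h = min (min d1 d2) (min \<eta> (1/2)) / 2"
  have h: "h > 0" "h < d1" "h < d2" "h \<le> \<eta>" "h \<le> 1/4"
    unfolding h_def using d1 d2 E by (auto simp: min_def)
  define k where "k = \<kappa>0 + h"
  have hk: "\<bar>k - \<kappa>0\<bar> = h" unfolding k_def using h by simp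
  have kp: "k > 0" unfolding k_def using k0 h by simp
  have k: "good k" unfolding good_def Y0_def k_def using k0 h by simp
  have c: "cond k T0" by (rule BS[OF k]) (use hk h in simp)
  have Rk: "\<bar>R k - R0\<bar> \<le> e * h"
    using d2(2)[of k] hk h Rt[OF kp] Rt[OF k0] unfolding R0_def by simp
  have Mk: "\<bar>M k - M \<kappa>0\<bar> \<le> e * h" using d1(2)[of k] hk h by simp
  have Rkr: "R k \<in> {0..T0}" "R0 \<in> {0..T0}"
  proof -
    have "e * h \<le> (1/3) * (1/4)" using e h by (intro mult_mono) auto
    then have "e * h \<le> 1" by simp
    then show "R k \<in> {0..T0}" using Rk radius[OF kp] unfolding T0_def R0_def by auto
    show "R0 \<in> {0..T0}" using R0 by auto
  qed
  have yRk: "y k (R k) = 0" using radius[OF kp] by simp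
  have dyR: "\<bar>dy k R0\<bar> \<le> KF * (e * h)"
  proof -
    have "\<bar>dy k R0\<bar> = \<bar>y k R0 - y k (R k)\<bar>" unfolding dy_def using R0 yRk by simp
    also have "\<dots> \<le> KF * \<bar>R0 - R k\<bar>" by (rule y_lip[OF k c Rkr(2,1)])
    also have "\<dots> \<le> KF * (e * h)" using Rk KF by (intro mult_left_mono) (auto simp: abs_minus_commute)
    finally show ?thesis .
  qed
  have dmR: "\<bar>dm k R0\<bar> \<le> (4*pi*T0\<^sup>2*G) * (e * h) + e * h"
  proof -
    have "dm k R0 = (m k R0 - m k (R k)) + (M k - M \<kappa>0)"
      unfolding dm_def mass[OF kp] mass[OF k0] R0_def by simp
    then have "\<bar>dm k R0\<bar> \<le> \<bar>m k R0 - m k (R k)\<bar> + \<bar>M k - M \<kappa>0\<bar>" by simp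
    also have "\<dots> \<le> (4*pi*T0\<^sup>2*G) * (e * h) + e * h"
    proof (rule add_mono[OF _ Mk])
      have "\<bar>m k R0 - m k (R k)\<bar> \<le> (4*pi*T0\<^sup>2*G) * \<bar>R0 - R k\<bar>" by (rule m_lip[OF k Rkr(2,1)])
      also have "\<dots> \<le> (4*pi*T0\<^sup>2*G) * (e * h)" using Rk G by (intro mult_left_mono) (auto simp: abs_minus_commute)
      finally show "\<bar>m k R0 - m k (R k)\<bar> \<le> (4*pi*T0\<^sup>2*G) * (e * h)" .
    qed
    finally show ?thesis .
  qed
  have "\<bar>dy k \<epsilon>\<bar> + \<bar>dm k \<epsilon>\<bar> \<le> 2^N * (\<bar>dy k R0\<bar> + \<bar>dm k R0\<bar>)"
    unfolding N_def R0_def by (rule BE[OF k c eps(1)]) (use eps R0_def in auto)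
  also have "\<dots> \<le> 2^N * (A * (e * h))"
    using dyR dmR unfolding A_def by (intro mult_left_mono) (auto simp: algebra_simps)
  also have "\<dots> = (2^N * A * e) * h" by simp
  also have "\<dots> = h/3" using e by simp
  finally have up: "\<bar>dy k \<epsilon>\<bar> \<le> h/3" by simp
  have "(2/3) * \<bar>k - \<kappa>0\<bar> \<le> \<bar>dy k \<epsilon>\<bar>" by (rule stepD[OF k c eps(1,3,4)])
  then show False using up hk h by simp
qed

end

theorem lemma2p7:
  fixes P P' :: "real \<Rightarrow> real"
    and y :: "real \<Rightarrow> real \<Rightarrow> real"
    and R M :: "real \<Rightarrow> real"
  assumes eos: "eos P P'"
    and sol: "\<And>\<kappa>. \<kappa> > 0 \<Longrightarrow> tov_sol P P' \<kappa> (y \<kappa>)"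
    and radius: "\<And>\<kappa>. \<kappa> > 0 \<Longrightarrow> R \<kappa> > 0 \<and> y \<kappa> (R \<kappa>) = 0"
    and mass: "\<And>\<kappa>. \<kappa> > 0 \<Longrightarrow> M \<kappa> = massf P P' (y \<kappa>) (R \<kappa>)"
  shows "\<not> (\<exists>\<kappa>>0. (M has_real_derivative 0) (at \<kappa>) \<and>
                    ((\<lambda>k. M k / R k) has_real_derivative 0) (at \<kappa>))"
proof
  assume "\<exists>\<kappa>>0. (M has_real_derivative 0) (at \<kappa>) \<and> ((\<lambda>k. M k / R k) has_real_derivative 0) (at \<kappa>)"
  then obtain \<kappa>0 where k0: "\<kappa>0 > 0" and d: "(M has_real_derivative 0) (at \<kappa>0)"
    "((\<lambda>k. M k / R k) has_real_derivative 0) (at \<kappa>0)" by blast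
  interpret mainl P P' y R M \<kappa>0
    by (unfold_locales) (use eos sol radius mass k0 in auto)
  show False by (rule contra[OF d])
qed

end
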